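(* Let $n\ge 2$. <ol> <li>For every $n\ge2$, $\mathrm{A}'\cap\mathrm{B}'=\mathrm{Q}'$. If $n\equiv 1,2,3\pmod 4$, then $\mathrm{Q}'=\mathrm{Q}$.</li> <li>If $n\equiv 0\pmod 4$, then $\mathrm{Q}\subseteq\mathrm{Q}'\subseteq\mathrm{P}$ and $\mathrm{Q}\neq\mathrm{Q}'$.</li> <li>If $n=4$, then $\mathrm{Q}'=\mathrm{P}$.</li> <li>If $n\equiv0\pmod 4$ and $n\ge 8$, then $\mathrm{Q}'\ne\mathrm{P}$.</li> </ol>
   Context: Let $\mathrm{C}$ be either the real Clifford algebra $C\ell_{p,q}$ with $p+q=n$, or the complex Clifford algebra $C\ell(\mathbb{C}^n)$. It has identity $e$ and generators $e_1,\dots,e_n$ satisfying $e_ae_b+e_be_a=2\eta_{ab}e$. In the real case $\eta=\mathrm{diag}(1,\dots,1,-1,\dots,-1)$ with $p$ entries $+1$ and $q$ entries $-1$. In the complex case $\eta=I_n$. $\mathrm{C}^k$ is the grade-$k$ subspace, spanned by the products $e_{a_1}\cdots e_{a_k}$ with $a_1<\dots<a_k$. The even subspace is $\mathrm{C}^{(0)}=\bigoplus_{k\text{ even}}\mathrm{C}^k$ and the odd subspace is $\mathrm{C}^{(1)}=\bigoplus_{k\text{ odd}}\mathrm{C}^k$. The grade involution $U\mapsto\hat U$ is the linear automorphism acting on $\mathrm{C}^k$ as $(-1)^k$. The reversion $U\mapsto\tilde U$ is the linear anti-automorphism acting on $\mathrm{C}^k$ as $(-1)^{k(k-1)/2}$.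 For $S\subseteq\mathrm{C}$, $S^\times$ is the set of elements of $S$ invertible in $\mathrm{C}$, and $\mathrm{C}^{\times(j)}:=(\mathrm{C}^{(j)})^\times$. $\mathrm{Z}$ is the center: $\mathrm{Z}=\mathrm{C}^0$ for $n$ even and $\mathrm{Z}=\mathrm{C}^0\oplus\mathrm{C}^n$ for $n$ odd. Define: <ul> <li>$\mathrm{P}:=\mathrm{Z}^\times(\mathrm{C}^{\times(0)}\cup\mathrm{C}^{\times(1)})=\{WT: W\in\mathrm{Z}^\times, T\in\mathrm{C}^{\times(0)}\cup\mathrm{C}^{\times(1)}\}$;</li> <li>$\mathrm{Q}:=\{T\in\mathrm{P}:\tilde TT\in\mathrm{Z}^\times\}$;</li> <li>$\mathrm{Q}':=\{T\in\mathrm{P}:\tilde TT\in(\mathrm{C}^0\oplus\mathrm{C}^n)^\times\}$;</li> <li>$\mathrm{A}':=\{T\in\mathrm{C}^\times:\tilde TT\in(\mathrm{C}^0\oplus\mathrm{C}^n)^\times\}$;</li> <li>$\mathrm{B}':=\{T\in\mathrm{C}^\times:\hat{\tilde T}T\in(\mathrm{C}^0\oplus\mathrm{C}^n)^\times\}$.</li> </ul> *)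

theory Defs
  imports Complex_Main
begin

text \<open>Clifford algebra on generators e_0,...,e_{n-1} (0-indexed) with diagonal
metric given by sg :: nat => 'a (sg a = eta_aa).  An element is a coefficient
function on finite sets of generator indices (basis blades e_A, A subset of {..<n}),
vanishing outside subsets of {..<n}.\<close>

definition clif :: "nat \<Rightarrow> (nat set \<Rightarrow> 'a::field) set" where
  "clif n = {x. \<forall>A. \<not> A \<subseteq> {..<n} \<longrightarrow> x A = 0}"

text \<open>e_A e_B = (-1)^{#{(a,b) in A x B. b < a}} (prod_{a in A cap B} eta_aa) e_{A sym-diff B}\<close>
definition blade_sign :: "(nat \<Rightarrow> 'a::field) \<Rightarrow> nat set \<Rightarrow> nat set \<Rightarrow> 'a" where
  "blade_sign sg A B = (-1) ^ card {(a,b). a \<in> A \<and> b \<in> B \<and> b < a} * (\<Prod>a\<in>A \<inter> B. sg a)"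

definition cl_mult :: "(nat \<Rightarrow> 'a::field) \<Rightarrow> nat \<Rightarrow> (nat set \<Rightarrow> 'a) \<Rightarrow> (nat set \<Rightarrow> 'a) \<Rightarrow> (nat set \<Rightarrow> 'a)" where
  "cl_mult sg n x y = (\<lambda>C. \<Sum>A\<in>Pow {..<n}. \<Sum>B\<in>Pow {..<n}.
      if (A - B) \<union> (B - A) = C then blade_sign sg A B * x A * y B else 0)"

definition cl_one :: "nat set \<Rightarrow> 'a::field" where
  "cl_one = (\<lambda>A. if A = {} then 1 else 0)"

definition cl_invertible :: "(nat \<Rightarrow> 'a::field) \<Rightarrow> nat \<Rightarrow> (nat set \<Rightarrow> 'a) \<Rightarrow> bool" where
  "cl_invertible sg n x \<longleftrightarrow> x \<in> clif n \<and>
     (\<exists>y\<in>clif n. cl_mult sg n x y = cl_one \<and> cl_mult sg n y x = cl_one)"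

definition cl_units :: "(nat \<Rightarrow> 'a::field) \<Rightarrow> nat \<Rightarrow> (nat set \<Rightarrow> 'a) set \<Rightarrow> (nat set \<Rightarrow> 'a) set" where
  "cl_units sg n S = {x \<in> S. cl_invertible sg n x}"

definition cl_hat :: "(nat set \<Rightarrow> 'a::field) \<Rightarrow> (nat set \<Rightarrow> 'a)" where
  "cl_hat x = (\<lambda>A. (-1) ^ card A * x A)"

definition cl_rev :: "(nat set \<Rightarrow> 'a::field) \<Rightarrow> (nat set \<Rightarrow> 'a)" where
  "cl_rev x = (\<lambda>A. (-1) ^ (card A * (card A - 1) div 2) * x A)"

definition cl_even :: "nat \<Rightarrow> (nat set \<Rightarrow> 'a::field) set" where
  "cl_even n = {x \<in> clif n. \<forall>A. odd (card A) \<longrightarrow> x A = 0}"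

definition cl_odd :: "nat \<Rightarrow> (nat set \<Rightarrow> 'a::field) set" where
  "cl_odd n = {x \<in> clif n. \<forall>A. even (card A) \<longrightarrow> x A = 0}"

definition cl_scal_pseudo :: "nat \<Rightarrow> (nat set \<Rightarrow> 'a::field) set" where
  "cl_scal_pseudo n = {x \<in> clif n. \<forall>A. A \<noteq> {} \<and> A \<noteq> {..<n} \<longrightarrow> x A = 0}"

definition cl_center :: "nat \<Rightarrow> (nat set \<Rightarrow> 'a::field) set" where
  "cl_center n = (if even n then {x \<in> clif n. \<forall>A. A \<noteq> {} \<longrightarrow> x A = 0}
                  else cl_scal_pseudo n)"

definition cl_P :: "(nat \<Rightarrow> 'a::field) \<Rightarrow> nat \<Rightarrow> (nat set \<Rightarrow> 'a) set" where
  "cl_P sg n = {cl_mult sg n W T | W T. W \<in> cl_units sg n (cl_center n) \<and>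
                  T \<in> cl_units sg n (cl_even n) \<union> cl_units sg n (cl_odd n)}"

definition cl_Q :: "(nat \<Rightarrow> 'a::field) \<Rightarrow> nat \<Rightarrow> (nat set \<Rightarrow> 'a) set" where
  "cl_Q sg n = {T \<in> cl_P sg n. cl_mult sg n (cl_rev T) T \<in> cl_units sg n (cl_center n)}"

definition cl_Q' :: "(nat \<Rightarrow> 'a::field) \<Rightarrow> nat \<Rightarrow> (nat set \<Rightarrow> 'a) set" where
  "cl_Q' sg n = {T \<in> cl_P sg n. cl_mult sg n (cl_rev T) T \<in> cl_units sg n (cl_scal_pseudo n)}"

definition cl_A' :: "(nat \<Rightarrow> 'a::field) \<Rightarrow> nat \<Rightarrow> (nat set \<Rightarrow> 'a) set" where
  "cl_A' sg n = {T \<in> cl_units sg n (clif n).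
                   cl_mult sg n (cl_rev T) T \<in> cl_units sg n (cl_scal_pseudo n)}"

definition cl_B' :: "(nat \<Rightarrow> 'a::field) \<Rightarrow> nat \<Rightarrow> (nat set \<Rightarrow> 'a) set" where
  "cl_B' sg n = {T \<in> cl_units sg n (clif n).
                   cl_mult sg n (cl_hat (cl_rev T)) T \<in> cl_units sg n (cl_scal_pseudo n)}"

definition real_sig :: "nat \<Rightarrow> nat \<Rightarrow> real" where
  "real_sig p = (\<lambda>a. if a < p then 1 else -1)"

definition complex_sig :: "nat \<Rightarrow> complex" where
  "complex_sig = (\<lambda>a. 1)"

end

theory Submission
  imports Defs
begin

definition sig2 :: "nat set \<Rightarrow> nat set \<Rightarrow> 'a::field" where
  "sig2 A B = (\<Prod>a\<in>A. \<Prod>b\<in>B. (if b < a then -1 else 1))"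

lemma neg1_card_prod:
  assumes "finite A" "finite B"
  shows "((-1::'a::field) ^ card {(a,b). a \<in> A \<and> b \<in> B \<and> b < a}) = sig2 A B"
proof -
  let ?S = "{(a,b). a \<in> A \<and> b \<in> B \<and> b < a}"
  have S: "?S = {x \<in> A \<times> B. (case x of (a,b) \<Rightarrow> b < a)}" by auto
  have "((-1::'a) ^ card ?S) = (\<Prod>x\<in>?S. -1)" by simp
  also have "\<dots> = (\<Prod>x\<in>A\<times>B. (case x of (a,b) \<Rightarrow> if b < a then -1 else 1))"
    unfolding S using assms
    by (subst prod.inter_filter) (auto intro!: prod.cong)
  also have "\<dots> = sig2 A B" unfolding sig2_def prod.cartesian_product by simp
  finally show ?thesis .
qed

lemma bs_sig: "finite A \<Longrightarrow> finite B \<Longrightarrow> blade_sign sg A B = sig2 A B * (\<Prod>a\<in>A \<inter> B. sg a)"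
  unfolding blade_sign_def by (simp add: neg1_card_prod)

lemma prod_symdiff:
  fixes f :: "nat \<Rightarrow> 'a::field"
  assumes "finite A" "finite B" "\<And>x. f x * f x = 1"
  shows "prod f ((A - B) \<union> (B - A)) = prod f A * prod f B"
proof -
  have sq: "prod f (A \<inter> B) * prod f (A \<inter> B) = 1"
    by (simp add: prod.distrib[symmetric] assms(3))
  have 1: "prod f A = prod f (A - B) * prod f (A \<inter> B)"
    using prod.Int_Diff[OF assms(1), of f B] by (simp add: mult.commute)
  have 2: "prod f B = prod f (B - A) * prod f (A \<inter> B)"
    using prod.Int_Diff[OF assms(2), of f A] by (simp add: mult.commute Int_commute)
  have 3: "prod f ((A - B) \<union> (B - A)) = prod f (A - B) * prod f (B - A)"
    using assms by (intro prod.union_disjoint) auto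
  show ?thesis
  proof -
    have "prod f (A - B) * prod f (A \<inter> B) * (prod f (B - A) * prod f (A \<inter> B))
        = prod f (A - B) * prod f (B - A) * (prod f (A \<inter> B) * prod f (A \<inter> B))"
      by (simp add: mult_ac)
    thus ?thesis using sq 1 2 3 by simp
  qed
qed

lemma sq_prod: "(\<And>x. x \<in> A \<Longrightarrow> f x * f x = (1::'a::field)) \<Longrightarrow> prod f A * prod f A = 1"
  by (simp add: prod.distrib[symmetric] del: prod.distrib)

lemma sig2_sq: "sig2 A B * sig2 A B = (1::'a::field)"
  unfolding sig2_def by (intro sq_prod) auto

lemma sig2_symdiff1:
  assumes "finite A" "finite B"
  shows "sig2 ((A - B) \<union> (B - A)) C = (sig2 A C * sig2 B C :: 'a::field)"
  unfolding sig2_def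
  by (rule prod_symdiff[OF assms]) (intro sq_prod, auto)

lemma sig2_symdiff2:
  assumes "finite B" "finite C"
  shows "sig2 A ((B - C) \<union> (C - B)) = (sig2 A B * sig2 A C :: 'a::field)"
  unfolding sig2_def prod.distrib[symmetric]
  by (rule prod.cong[OF refl], rule prod_symdiff[OF assms]) auto


lemma cocycle:
  assumes "finite A" "finite B" "finite C"
  shows "blade_sign sg A B * blade_sign sg (sym_diff A B) C
       = blade_sign sg A (sym_diff B C) * (blade_sign sg B C :: 'a::field)"
proof -
  have fin: "finite (sym_diff A B)" "finite (sym_diff B C)" using assms by auto
  have s: "sig2 A B * sig2 (sym_diff A B) C = (sig2 A (sym_diff B C) * sig2 B C :: 'a)"
    using assms by (simp add: sig2_symdiff1 sig2_symdiff2 mult_ac)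
  let ?M = "(A \<inter> B) \<union> (A \<inter> C) \<union> (B \<inter> C)"
  have p1: "(\<Prod>a\<in>A \<inter> B. sg a) * (\<Prod>a\<in>sym_diff A B \<inter> C. sg a) = (\<Prod>a\<in>?M. sg a)"
  proof -
    have "?M = (A \<inter> B) \<union> (sym_diff A B \<inter> C)" by auto
    thus ?thesis using assms by (simp add: prod.union_disjoint[symmetric] Int_Un_distrib2 Diff_Int_distrib2) (intro prod.union_disjoint[symmetric]; auto)
  qed
  have p2: "(\<Prod>a\<in>A \<inter> sym_diff B C. sg a) * (\<Prod>a\<in>B \<inter> C. sg a) = (\<Prod>a\<in>?M. sg a)"
  proof -
    have "?M = (A \<inter> sym_diff B C) \<union> (B \<inter> C)" by auto
    thus ?thesis using assms by simp (intro prod.union_disjoint[symmetric]; auto)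
  qed
  have l: "blade_sign sg A B * blade_sign sg (sym_diff A B) C = (sig2 A B * sig2 (sym_diff A B) C) *
     ((\<Prod>a\<in>A \<inter> B. sg a) * (\<Prod>a\<in>sym_diff A B \<inter> C. sg a))"
    using assms fin by (simp add: bs_sig mult_ac)
  have r: "blade_sign sg A (sym_diff B C) * blade_sign sg B C = (sig2 A (sym_diff B C) * sig2 B C) *
     ((\<Prod>a\<in>A \<inter> sym_diff B C. sg a) * (\<Prod>a\<in>B \<inter> C. sg a))"
    using assms fin by (simp add: bs_sig mult_ac)
  show ?thesis unfolding l r p1 p2 s ..
qed

lemma card_lower_pairs:
  fixes A :: "nat set"
  assumes "finite A"
  shows "card {(a,b). a \<in> A \<and> b \<in> A \<and> b < a} = card A * (card A - 1) div 2"
proof -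
  let ?S = "{(a,b). a \<in> A \<and> b \<in> A \<and> b < a}"
  let ?T = "{(a,b). a \<in> A \<and> b \<in> A \<and> a < b}"
  let ?D = "{(a,b). a \<in> A \<and> b \<in> A \<and> a = b}"
  have fS: "finite ?S" "finite ?T" "finite ?D"
    by (rule finite_subset[of _ "A \<times> A"], auto simp: assms)+
  have u: "A \<times> A = ?S \<union> ?T \<union> ?D" by (auto simp: not_less_iff_gr_or_eq)
  have cST: "card ?T = card ?S"
  proof -
    have "?T = (\<lambda>(a,b). (b,a)) ` ?S" by auto
    moreover have "inj_on (\<lambda>(a,b). (b,a)) ?S" by (auto simp: inj_on_def)
    ultimately show ?thesis by (simp add: card_image)
  qed
  have cD: "card ?D = card A"
  proof -
    have "?D = (\<lambda>a. (a,a)) ` A" by auto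
    thus ?thesis by (simp add: card_image inj_on_def)
  qed
  have "card (A \<times> A) = card ?S + card ?T + card ?D"
    unfolding u using fS by (subst card_Un_disjoint, auto simp: card_Un_disjoint)+
  hence "card A * card A = 2 * card ?S + card A" using cST cD by (simp add: card_cartesian_product)
  hence "card A * (card A - 1) = 2 * card ?S" by (simp add: diff_mult_distrib2)
  thus ?thesis by simp
qed

lemma rev_sign: "finite (A::nat set) \<Longrightarrow> ((-1::'a::field) ^ (card A * (card A - 1) div 2)) = sig2 A A"
  using neg1_card_prod[of A A] by (simp add: card_lower_pairs)

lemma sig2_swap:
  "sig2 A B * sig2 B A = (\<Prod>a\<in>A. \<Prod>b\<in>B. (if a = b then 1 else -1 :: 'a::field))"
proof -
  have "sig2 B A = (\<Prod>a\<in>A. \<Prod>b\<in>B. (if a < b then -1 else 1 :: 'a))"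
    unfolding sig2_def by (rule prod.swap)
  thus ?thesis unfolding sig2_def
    by (simp add: prod.distrib[symmetric] del: prod.distrib) (intro prod.cong refl, auto)
qed

lemma sig2_swap_full:
  assumes "A \<subseteq> B" "finite B"
  shows "sig2 A B * sig2 B A = ((-1) ^ ((card B - 1) * card A) :: 'a::field)"
proof -
  have "\<And>a. a \<in> A \<Longrightarrow> (\<Prod>b\<in>B. (if a = b then 1 else -1 :: 'a)) = (-1) ^ (card B - 1)"
  proof -
    fix a assume a: "a \<in> A"
    have "(\<Prod>b\<in>B. (if a = b then 1 else -1 :: 'a)) = (\<Prod>b\<in>B - {a}. (if a = b then 1 else -1 :: 'a))"
      using a assms by (intro prod.mono_neutral_right) auto
    also have "\<dots> = (\<Prod>b\<in>B - {a}. -1)" by (intro prod.cong) auto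
    also have "\<dots> = (-1) ^ (card B - 1)" using a assms by auto
    finally show "(\<Prod>b\<in>B. (if a = b then 1 else -1 :: 'a)) = (-1) ^ (card B - 1)" .
  qed
  hence "sig2 A B * sig2 B A = (\<Prod>a\<in>A. (-1::'a) ^ (card B - 1))"
    unfolding sig2_swap by (intro prod.cong) auto
  thus ?thesis by (simp add: power_mult[symmetric])
qed


lemma sum_single:
  assumes "finite S" "a \<in> S" "\<And>x. x \<in> S \<Longrightarrow> x \<noteq> a \<Longrightarrow> f x = 0"
  shows "sum f S = f a"
proof -
  have "sum f S = f a + sum f (S - {a})" using assms by (simp add: sum.remove)
  also have "sum f (S - {a}) = 0" using assms by (intro sum.neutral) auto
  finally show ?thesis by simp
qed

lemma collapse:
  fixes g :: "nat set \<Rightarrow> nat set \<Rightarrow> nat set \<Rightarrow> 'a::comm_monoid_add"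
  assumes that: "finite N"
  shows "(\<Sum>D\<in>Pow N. \<Sum>A\<in>Pow N. \<Sum>B\<in>Pow N. if sym_diff A B = D then g A B D else 0)
       = (\<Sum>A\<in>Pow N. \<Sum>B\<in>Pow N. g A B (sym_diff A B))"
proof -
  have "(\<Sum>D\<in>Pow N. \<Sum>A\<in>Pow N. \<Sum>B\<in>Pow N. if sym_diff A B = D then g A B D else 0)
      = (\<Sum>A\<in>Pow N. \<Sum>D\<in>Pow N. \<Sum>B\<in>Pow N. if sym_diff A B = D then g A B D else 0)"
    by (rule sum.swap)
  also have "\<dots> = (\<Sum>A\<in>Pow N. \<Sum>B\<in>Pow N. \<Sum>D\<in>Pow N. if sym_diff A B = D then g A B D else 0)"
    by (rule sum.cong[OF refl], rule sum.swap)
  also have "\<dots> = (\<Sum>A\<in>Pow N. \<Sum>B\<in>Pow N. g A B (sym_diff A B))"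
    by (rule sum.cong[OF refl], rule sum.cong[OF refl]) (auto simp: sum.delta' that)
  finally show ?thesis .
qed

lemma cl_mult_assoc:
  "cl_mult sg n (cl_mult sg n x y) z = cl_mult sg n x (cl_mult sg n y z)"
proof
  fix C
  let ?P = "Pow {..<n}"
  let ?b = "blade_sign sg"
  have fin: "finite ?P" by simp
  let ?G = "\<lambda>A B E. if sym_diff (sym_diff A B) E = C then ?b A B * ?b (sym_diff A B) E * x A * y B * z E else 0"
  have L: "cl_mult sg n (cl_mult sg n x y) z C = (\<Sum>A\<in>?P. \<Sum>B\<in>?P. \<Sum>E\<in>?P. ?G A B E)"
  proof -
    have "cl_mult sg n (cl_mult sg n x y) z C =
       (\<Sum>D\<in>?P. \<Sum>E\<in>?P. \<Sum>A\<in>?P. \<Sum>B\<in>?P. if sym_diff A B = D then (if sym_diff D E = C then ?b D E * ?b A B * x A * y B * z E else 0) else 0)"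
      unfolding cl_mult_def
      by (intro sum.cong refl) (simp add: sum_distrib_left sum_distrib_right if_distrib mult_ac cong: if_cong)
    also have "\<dots> = (\<Sum>D\<in>?P. \<Sum>A\<in>?P. \<Sum>B\<in>?P. \<Sum>E\<in>?P. if sym_diff A B = D then (if sym_diff D E = C then ?b D E * ?b A B * x A * y B * z E else 0) else 0)"
      apply (rule sum.cong[OF refl])
      apply (rule trans[OF sum.swap])
      apply (rule sum.cong[OF refl])
      by (rule sum.swap)
    also have "\<dots> = (\<Sum>D\<in>?P. \<Sum>A\<in>?P. \<Sum>B\<in>?P. if sym_diff A B = D then (\<Sum>E\<in>?P. if sym_diff D E = C then ?b D E * ?b A B * x A * y B * z E else 0) else 0)"
      by (intro sum.cong refl) auto
    also have "\<dots> = (\<Sum>A\<in>?P. \<Sum>B\<in>?P. \<Sum>E\<in>?P. ?G A B E)"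
      by (subst collapse[where g="\<lambda>A B D. \<Sum>E\<in>?P. if sym_diff D E = C then ?b D E * ?b A B * x A * y B * z E else 0"]) (auto simp: mult_ac intro!: sum.cong)
    finally show ?thesis .
  qed
  have R: "cl_mult sg n x (cl_mult sg n y z) C = (\<Sum>A\<in>?P. \<Sum>B\<in>?P. \<Sum>E\<in>?P. ?G A B E)"
  proof -
    have "cl_mult sg n x (cl_mult sg n y z) C =
       (\<Sum>A\<in>?P. \<Sum>F\<in>?P. \<Sum>B\<in>?P. \<Sum>E\<in>?P. if sym_diff B E = F then (if sym_diff A F = C then ?b A F * ?b B E * x A * y B * z E else 0) else 0)"
      unfolding cl_mult_def
      by (intro sum.cong refl) (simp add: sum_distrib_left sum_distrib_right if_distrib mult_ac cong: if_cong)
    also have "\<dots> = (\<Sum>A\<in>?P. \<Sum>B\<in>?P. \<Sum>E\<in>?P. if sym_diff A (sym_diff B E) = C then ?b A (sym_diff B E) * ?b B E * x A * y B * z E else 0)"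
    proof (rule sum.cong[OF refl])
      fix A assume "A \<in> ?P"
      show "(\<Sum>F\<in>?P. \<Sum>B\<in>?P. \<Sum>E\<in>?P. if sym_diff B E = F then (if sym_diff A F = C then ?b A F * ?b B E * x A * y B * z E else 0) else 0)
        = (\<Sum>B\<in>?P. \<Sum>E\<in>?P. if sym_diff A (sym_diff B E) = C then ?b A (sym_diff B E) * ?b B E * x A * y B * z E else 0)"
        by (rule collapse[where g="\<lambda>B E F. if sym_diff A F = C then ?b A F * ?b B E * x A * y B * z E else 0"]) simp
    qed
    also have "\<dots> = (\<Sum>A\<in>?P. \<Sum>B\<in>?P. \<Sum>E\<in>?P. ?G A B E)"
    proof (intro sum.cong refl)
      fix A B E assume "A \<in> ?P" "B \<in> ?P" "E \<in> ?P"
      hence f: "finite A" "finite B" "finite E" by (auto intro: finite_subset)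
      have e: "sym_diff A (sym_diff B E) = sym_diff (sym_diff A B) E" by auto
      show "(if sym_diff A (sym_diff B E) = C then ?b A (sym_diff B E) * ?b B E * x A * y B * z E else 0) = ?G A B E"
        unfolding e using cocycle[OF f, of sg] by (simp add: mult_ac)
    qed
    finally show ?thesis .
  qed
  show "cl_mult sg n (cl_mult sg n x y) z C = cl_mult sg n x (cl_mult sg n y z) C" using L R by simp
qed


declare if_cong[cong]

abbreviation blade :: "'a::field \<Rightarrow> nat set \<Rightarrow> nat set \<Rightarrow> 'a" where
  "blade c S \<equiv> (\<lambda>A. if A = S then c else 0)"

lemma fin_Pow: "A \<in> Pow {..<(n::nat)} \<Longrightarrow> finite A" by (meson PowD finite_lessThan finite_subset)

lemma mult_clif: "cl_mult sg n x y \<in> clif n"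
  unfolding clif_def cl_mult_def
  by (auto intro!: sum.neutral)

lemma mult_blade_left:
  assumes S: "S \<subseteq> {..<n}"
  shows "cl_mult sg n (blade c S) y C = (if C \<subseteq> {..<n} then c * blade_sign sg S (sym_diff S C) * y (sym_diff S C) else 0)"
proof -
  have "cl_mult sg n (blade c S) y C = (\<Sum>B\<in>Pow {..<n}. if sym_diff S B = C then blade_sign sg S B * c * y B else 0)"
  proof -
    have "cl_mult sg n (blade c S) y C = (\<Sum>A\<in>Pow {..<n}. if A = S then (\<Sum>B\<in>Pow {..<n}. if sym_diff S B = C then blade_sign sg S B * c * y B else 0) else 0)"
      unfolding cl_mult_def
    proof (rule sum.cong[OF refl])
      fix A show "(\<Sum>B\<in>Pow {..<n}. if sym_diff A B = C then blade_sign sg A B * blade c S A * y B else 0) =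
         (if A = S then \<Sum>B\<in>Pow {..<n}. if sym_diff S B = C then blade_sign sg S B * c * y B else 0 else 0)"
        by (cases "A = S") simp_all
    qed
    thus ?thesis using S by (simp add: sum.delta')
  qed
  also have "\<dots> = (if C \<subseteq> {..<n} then c * blade_sign sg S (sym_diff S C) * y (sym_diff S C) else 0)"
  proof (cases "C \<subseteq> {..<n}")
    case True
    have e: "\<And>B. (sym_diff S B = C) = (B = sym_diff S C)" by auto
    show ?thesis unfolding e using True S
      by (subst sum_single[where a="sym_diff S C"]) auto
  next
    case False
    hence "\<And>B. B \<subseteq> {..<n} \<Longrightarrow> sym_diff S B \<noteq> C" using S by auto
    thus ?thesis using False by (auto intro!: sum.neutral)
  qed
  finally show ?thesis .
qed

lemma mult_blade_right:
  assumes S: "S \<subseteq> {..<n}"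
  shows "cl_mult sg n x (blade c S) C = (if C \<subseteq> {..<n} then blade_sign sg (sym_diff S C) S * x (sym_diff S C) * c else 0)"
proof -
  have "cl_mult sg n x (blade c S) C = (\<Sum>A\<in>Pow {..<n}. if sym_diff A S = C then blade_sign sg A S * x A * c else 0)"
    unfolding cl_mult_def
  proof (rule sum.cong[OF refl])
    fix A assume "A \<in> Pow {..<n}"
    have "(\<Sum>B\<in>Pow {..<n}. if sym_diff A B = C then blade_sign sg A B * x A * blade c S B else 0)
      = (\<Sum>B\<in>Pow {..<n}. if B = S then (if sym_diff A S = C then blade_sign sg A S * x A * c else 0) else 0)"
      by (intro sum.cong refl) simp
    thus "(\<Sum>B\<in>Pow {..<n}. if sym_diff A B = C then blade_sign sg A B * x A * blade c S B else 0)
      = (if sym_diff A S = C then blade_sign sg A S * x A * c else 0)" using S by (simp add: sum.delta')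
  qed
  also have "\<dots> = (if C \<subseteq> {..<n} then blade_sign sg (sym_diff S C) S * x (sym_diff S C) * c else 0)"
  proof (cases "C \<subseteq> {..<n}")
    case True
    have e: "\<And>B. (sym_diff B S = C) = (B = sym_diff S C)" by auto
    show ?thesis unfolding e using True S
      by (subst sum_single[where a="sym_diff S C"]) auto
  next
    case False
    hence "\<And>B. B \<subseteq> {..<n} \<Longrightarrow> sym_diff B S \<noteq> C" using S by auto
    thus ?thesis using False by (auto intro!: sum.neutral)
  qed
  finally show ?thesis .
qed

lemma mult_add_left: "cl_mult sg n (\<lambda>A. x A + y A) z = (\<lambda>C. cl_mult sg n x z C + cl_mult sg n y z C)"
  unfolding cl_mult_def by (auto simp: sum.distrib[symmetric] algebra_simps intro!: sum.cong)

lemma mult_add_right: "cl_mult sg n z (\<lambda>A. x A + y A) = (\<lambda>C. cl_mult sg n z x C + cl_mult sg n z y C)"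
  unfolding cl_mult_def by (auto simp: sum.distrib[symmetric] algebra_simps intro!: sum.cong)

lemma mult_scal_left: "cl_mult sg n (\<lambda>A. c * x A) z = (\<lambda>C. c * cl_mult sg n x z C)"
  unfolding cl_mult_def by (auto simp: sum_distrib_left algebra_simps intro!: sum.cong)

lemma mult_scal_right: "cl_mult sg n z (\<lambda>A. c * x A) = (\<lambda>C. c * cl_mult sg n z x C)"
  unfolding cl_mult_def by (auto simp: sum_distrib_left algebra_simps intro!: sum.cong)

lemma one_blade: "cl_one = blade 1 {}"
  unfolding cl_one_def by auto

lemma bs_empty1: "blade_sign sg {} B = 1" unfolding blade_sign_def by simp
lemma bs_empty2: "blade_sign sg A {} = 1" unfolding blade_sign_def by simp

lemma mult_one_left: "x \<in> clif n \<Longrightarrow> cl_mult sg n cl_one x = x"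
  unfolding one_blade by (rule ext) (simp add: mult_blade_left bs_empty1 clif_def one_blade)

lemma mult_one_right: "x \<in> clif n \<Longrightarrow> cl_mult sg n x cl_one = x"
  unfolding one_blade by (rule ext) (simp add: mult_blade_right bs_empty2 clif_def one_blade)

lemma one_clif: "cl_one \<in> clif n" unfolding clif_def cl_one_def by auto

lemma hat_mult: "cl_hat (cl_mult sg n x y) = cl_mult sg n (cl_hat x) (cl_hat y)"
proof
  fix C
  show "cl_hat (cl_mult sg n x y) C = cl_mult sg n (cl_hat x) (cl_hat y) C"
    unfolding cl_hat_def cl_mult_def sum_distrib_left
  proof (intro sum.cong refl)
    fix A B assume "A \<in> Pow {..<n}" "B \<in> Pow {..<n}"
    hence f: "finite A" "finite B" by (auto intro: fin_Pow)
    have "prod (\<lambda>_. -1::'a) (sym_diff A B) = prod (\<lambda>_. -1) A * prod (\<lambda>_. -1) B"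
      by (rule prod_symdiff[OF f]) simp
    hence "(-1::'a) ^ card (sym_diff A B) = (-1) ^ card A * (-1) ^ card B" by simp
    thus "(-1) ^ card C * (if sym_diff A B = C then blade_sign sg A B * x A * y B else 0) =
         (if sym_diff A B = C then blade_sign sg A B * ((-1) ^ card A * x A) * ((-1) ^ card B * y B) else 0)"
      by (auto simp: mult_ac)
  qed
qed

lemma rev_factor:
  assumes "finite A" "finite B"
  shows "sig2 (sym_diff A B) (sym_diff A B) * blade_sign sg A B
       = (sig2 A A * sig2 B B * blade_sign sg B A :: 'a::field)"
proof -
  have f: "finite (sym_diff A B)" using assms by auto
  have "sig2 (sym_diff A B) (sym_diff A B) = (sig2 A A * sig2 A B * (sig2 B A * sig2 B B) :: 'a)"
    using assms f by (simp add: sig2_symdiff1 sig2_symdiff2)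
  moreover have "A \<inter> B = B \<inter> A" by auto
  ultimately have "sig2 (sym_diff A B) (sym_diff A B) * blade_sign sg A B
     = sig2 A A * sig2 B B * (sig2 B A * (\<Prod>a\<in>B \<inter> A. sg a)) * (sig2 A B * sig2 A B)"
    using assms by (simp add: bs_sig mult_ac)
  also have "\<dots> = sig2 A A * sig2 B B * (sig2 B A * (\<Prod>a\<in>B \<inter> A. sg a))"
    by (simp only: sig2_sq mult_1_right)
  finally show ?thesis using assms by (simp add: bs_sig)
qed

lemma rev_mult: "cl_rev (cl_mult sg n x y) = cl_mult sg n (cl_rev y) (cl_rev x)"
proof
  fix C
  have "cl_rev (cl_mult sg n x y) C = (\<Sum>A\<in>Pow {..<n}. \<Sum>B\<in>Pow {..<n}.
     (-1) ^ (card C * (card C - 1) div 2) * (if sym_diff A B = C then blade_sign sg A B * x A * y B else 0))"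
    unfolding cl_rev_def cl_mult_def sum_distrib_left by simp
  also have "\<dots> = (\<Sum>A\<in>Pow {..<n}. \<Sum>B\<in>Pow {..<n}.
     (if sym_diff B A = C then blade_sign sg B A * ((-1) ^ (card B * (card B - 1) div 2) * y B) * ((-1) ^ (card A * (card A - 1) div 2) * x A) else 0))"
  proof (intro sum.cong refl)
    fix A B assume "A \<in> Pow {..<n}" "B \<in> Pow {..<n}"
    hence f: "finite A" "finite B" by (auto intro: fin_Pow)
    hence f2: "finite (sym_diff A B)" by auto
    have e: "sym_diff B A = sym_diff A B" by auto
    show "(-1) ^ (card C * (card C - 1) div 2) * (if sym_diff A B = C then blade_sign sg A B * x A * y B else 0) =
         (if sym_diff B A = C then blade_sign sg B A * ((-1) ^ (card B * (card B - 1) div 2) * y B) * ((-1) ^ (card A * (card A - 1) div 2) * x A) else 0)"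
    proof -
      have r: "sig2 (sym_diff A B) (sym_diff A B) * blade_sign sg A B = sig2 A A * sig2 B B * blade_sign sg B A"
        by (rule rev_factor[OF f])
      have k: "sig2 (sym_diff A B) (sym_diff A B) * (blade_sign sg A B * x A * y B) = blade_sign sg B A * (sig2 B B * y B) * (sig2 A A * x A)"
      proof -
        have "sig2 (sym_diff A B) (sym_diff A B) * (blade_sign sg A B * x A * y B) = (sig2 (sym_diff A B) (sym_diff A B) * blade_sign sg A B) * (x A * y B)" by (simp add: mult_ac)
        also have "\<dots> = (sig2 A A * sig2 B B * blade_sign sg B A) * (x A * y B)" using r by simp
        also have "\<dots> = blade_sign sg B A * (sig2 B B * y B) * (sig2 A A * x A)" by (simp add: mult_ac)
        finally show ?thesis .
      qed
      show ?thesis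
      proof (cases "sym_diff A B = C")
        case True
        have c: "((-1::'a) ^ (card C * (card C - 1) div 2)) = sig2 (sym_diff A B) (sym_diff A B)"
          using True rev_sign[OF f2] by simp
        show ?thesis unfolding e c rev_sign[OF f(1)] rev_sign[OF f(2)] using True k by simp
      qed (simp add: e)
    qed
  qed
  also have "\<dots> = cl_mult sg n (cl_rev y) (cl_rev x) C"
    unfolding cl_mult_def cl_rev_def by (rule sum.swap)
  finally show "cl_rev (cl_mult sg n x y) C = cl_mult sg n (cl_rev y) (cl_rev x) C" .
qed


definition gsp :: "nat set \<Rightarrow> 'a::field \<Rightarrow> 'a \<Rightarrow> nat set \<Rightarrow> 'a" where
  "gsp S a b = (\<lambda>A. if A = {} then a else if A = S then b else 0)"

lemma gsp_apply: "gsp S a b A = (if A = {} then a else if A = S then b else 0)"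
  unfolding gsp_def by simp

lemma gsp_split: "S \<noteq> {} \<Longrightarrow> gsp S a b = (\<lambda>A. blade a {} A + blade b S A)"
  unfolding gsp_def by auto

lemma gsp_clif: "S \<subseteq> {..<n} \<Longrightarrow> gsp S a b \<in> clif n"
  unfolding clif_def gsp_def by auto

lemma gsp_eq_iff: "S \<noteq> {} \<Longrightarrow> gsp S a b = gsp S c d \<longleftrightarrow> a = c \<and> b = d"
proof
  assume S: "S \<noteq> {}" and h: "gsp S a b = gsp S c d"
  from fun_cong[OF h, of "{}"] fun_cong[OF h, of S] S show "a = c \<and> b = d" by (simp add: gsp_apply)
qed simp

lemma one_gsp: "S \<noteq> {} \<Longrightarrow> cl_one = gsp S 1 0"
  unfolding gsp_def cl_one_def by auto

lemma mult_gsp_left: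
  assumes S: "S \<subseteq> {..<n}" "S \<noteq> {}"
  shows "cl_mult sg n (gsp S a b) x C = (if C \<subseteq> {..<n} then a * x C + b * blade_sign sg S (sym_diff S C) * x (sym_diff S C) else 0)"
  unfolding gsp_split[OF S(2)] mult_add_left
  using mult_blade_left[OF S(1), of sg b x C] mult_blade_left[of "{}" n sg a x C]
  by (simp add: bs_empty1)

lemma mult_gsp_right:
  assumes S: "S \<subseteq> {..<n}" "S \<noteq> {}"
  shows "cl_mult sg n x (gsp S a b) C = (if C \<subseteq> {..<n} then x C * a + blade_sign sg (sym_diff S C) S * x (sym_diff S C) * b else 0)"
  unfolding gsp_split[OF S(2)] mult_add_right
  using mult_blade_right[OF S(1), of sg x b C] mult_blade_right[of "{}" n sg x a C]
  by (simp add: bs_empty2)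

lemma gsp_mult:
  assumes S: "S \<subseteq> {..<n}" "S \<noteq> {}"
  shows "cl_mult sg n (gsp S a b) (gsp S c d) = gsp S (a * c + blade_sign sg S S * b * d) (a * d + b * c)"
proof
  fix C
  show "cl_mult sg n (gsp S a b) (gsp S c d) C = gsp S (a * c + blade_sign sg S S * b * d) (a * d + b * c) C"
  proof (cases "C \<subseteq> {..<n}")
    case True
    have e1: "sym_diff S {} = S" "sym_diff S S = {}" by auto
    have e2: "C \<noteq> {} \<Longrightarrow> C \<noteq> S \<Longrightarrow> sym_diff S C \<noteq> {} \<and> sym_diff S C \<noteq> S" by auto
    show ?thesis unfolding mult_gsp_left[OF S]
      using True S e1 e2 by (auto simp: gsp_apply bs_empty2 mult_ac)
  next
    case False
    thus ?thesis unfolding mult_gsp_left[OF S] using S by (auto simp: gsp_apply)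
  qed
qed

lemma hat_gsp: "cl_hat (gsp S a b) = gsp S a ((-1) ^ card S * b)"
  unfolding cl_hat_def gsp_def by auto

lemma rev_gsp: "cl_rev (gsp S a b) = gsp S a ((-1) ^ (card S * (card S - 1) div 2) * b)"
  unfolding cl_rev_def gsp_def by auto

lemma bs_sq:
  assumes "finite S" "\<And>a. sg a * sg a = 1"
  shows "blade_sign sg S S * blade_sign sg S S = (1::'a::field)"
proof -
  have "blade_sign sg S S * blade_sign sg S S = (sig2 S S * sig2 S S) * ((\<Prod>a\<in>S. sg a) * (\<Prod>a\<in>S. sg a))"
    using assms by (simp add: bs_sig mult_ac)
  also have "\<dots> = 1" using assms by (simp add: sig2_sq sq_prod)
  finally show ?thesis .
qed

lemma sq1_cases: "(s::'a::field) * s = 1 \<Longrightarrow> s = 1 \<or> s = -1"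
proof -
  assume "s * s = 1"
  hence "(s - 1) * (s + 1) = 0" by (simp add: algebra_simps)
  thus ?thesis by (auto simp: eq_neg_iff_add_eq_0)
qed

lemma mult_zero_left': "cl_mult sg n (\<lambda>_. 0) y = (\<lambda>_. 0)"
  unfolding cl_mult_def by simp

lemma mult_zero_right': "cl_mult sg n y (\<lambda>_. 0) = (\<lambda>_. 0)"
  unfolding cl_mult_def by simp

lemma hat_hat: "cl_hat (cl_hat x) = x"
  unfolding cl_hat_def by (auto simp: power_mult_distrib[symmetric] mult.assoc[symmetric])

lemma rev_rev: "cl_rev (cl_rev x) = x"
  unfolding cl_rev_def by (auto simp: power_mult_distrib[symmetric] mult.assoc[symmetric])

lemma hat_rev: "cl_hat (cl_rev x) = cl_rev (cl_hat x)"
  unfolding cl_hat_def cl_rev_def by (auto simp: mult_ac)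

lemma hat_clif: "x \<in> clif n \<Longrightarrow> cl_hat x \<in> clif n"
  unfolding clif_def cl_hat_def by auto

lemma rev_clif: "x \<in> clif n \<Longrightarrow> cl_rev x \<in> clif n"
  unfolding clif_def cl_rev_def by auto

lemma hat_one: "cl_hat cl_one = cl_one"
  unfolding cl_hat_def cl_one_def by auto

lemma rev_one: "cl_rev cl_one = cl_one"
  unfolding cl_rev_def cl_one_def by auto

lemma hat_scal: "cl_hat (\<lambda>A. c * x A) = (\<lambda>A. c * cl_hat x A)"
  unfolding cl_hat_def by (auto simp: mult_ac)

lemma rev_scal: "cl_rev (\<lambda>A. c * x A) = (\<lambda>A. c * cl_rev x A)"
  unfolding cl_rev_def by (auto simp: mult_ac)


lemma inv_ar1: "(a * a - s * b * b :: 'a::field) \<noteq> 0 \<Longrightarrow> a * (a / (a * a - s * b * b)) + s * b * (- b / (a * a - s * b * b)) = 1"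
proof -
  assume d: "a * a - s * b * b \<noteq> 0"
  define D where "D = a * a - s * b * b"
  have "a * (a / D) + s * b * (- b / D) = (a * a - s * b * b) / D"
    by (simp add: diff_divide_distrib)
  also have "\<dots> = 1" using d unfolding D_def by simp
  finally show ?thesis unfolding D_def .
qed

lemma inv_ar2: "a * (- b / D) + b * (a / D) = (0::'a::field)"
  by (simp add: mult.commute)

locale clf =
  fixes sg :: "nat \<Rightarrow> 'a::field_char_0" and n :: nat
  assumes sq: "\<And>a. sg a * sg a = 1" and n2: "2 \<le> n"
begin

abbreviation "N \<equiv> {..<n}"
abbreviation "m \<equiv> cl_mult sg n"
abbreviation "U \<equiv> cl_invertible sg n"
definition "es = blade_sign sg N N"

lemma N_ne: "N \<noteq> {}"
proof -
  have "0 \<in> N" using n2 by auto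
  thus ?thesis by blast
qed

lemma es_sq: "es * es = 1" unfolding es_def by (rule bs_sq) (auto simp: sq)

lemma es_cases: "es = 1 \<or> es = -1" using es_sq sq1_cases by blast

lemma U_clif: "U x \<Longrightarrow> x \<in> clif n" unfolding cl_invertible_def by auto

lemma U_one: "U cl_one"
  unfolding cl_invertible_def using one_clif mult_one_left one_clif by blast

lemma U_mult: assumes "U x" "U y" shows "U (m x y)"
proof -
  obtain xi where xi: "xi \<in> clif n" "m x xi = cl_one" "m xi x = cl_one" using assms(1) unfolding cl_invertible_def by blast
  obtain yi where yi: "yi \<in> clif n" "m y yi = cl_one" "m yi y = cl_one" using assms(2) unfolding cl_invertible_def by blast
  have c: "x \<in> clif n" "y \<in> clif n" using assms U_clif by auto
  have "m (m x y) (m yi xi) = cl_one"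
    by (simp add: cl_mult_assoc) (metis cl_mult_assoc mult_one_left xi(1,2) yi(2))
  moreover have "m (m yi xi) (m x y) = cl_one"
    by (simp add: cl_mult_assoc) (metis cl_mult_assoc mult_one_left c(2) xi(3) yi(3))
  ultimately show ?thesis unfolding cl_invertible_def using mult_clif by blast
qed

lemma U_hat: assumes "U x" shows "U (cl_hat x)"
proof -
  obtain xi where xi: "xi \<in> clif n" "m x xi = cl_one" "m xi x = cl_one" using assms(1) unfolding cl_invertible_def by blast
  have "m (cl_hat x) (cl_hat xi) = cl_one" "m (cl_hat xi) (cl_hat x) = cl_one"
    by (metis hat_mult hat_one xi(2,3))+
  thus ?thesis unfolding cl_invertible_def using hat_clif xi(1) U_clif assms by blast
qed

lemma U_rev: assumes "U x" shows "U (cl_rev x)"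
proof -
  obtain xi where xi: "xi \<in> clif n" "m x xi = cl_one" "m xi x = cl_one" using assms(1) unfolding cl_invertible_def by blast
  have "m (cl_rev x) (cl_rev xi) = cl_one" "m (cl_rev xi) (cl_rev x) = cl_one"
    by (metis rev_mult rev_one xi(2,3))+
  thus ?thesis unfolding cl_invertible_def using rev_clif xi(1) U_clif assms by blast
qed

lemma U_inv: assumes "U x" obtains xi where "xi \<in> clif n" "m x xi = cl_one" "m xi x = cl_one" "U xi"
proof -
  obtain xi where xi: "xi \<in> clif n" "m x xi = cl_one" "m xi x = cl_one" using assms(1) unfolding cl_invertible_def by blast
  have "U xi" unfolding cl_invertible_def using xi U_clif[OF assms] by blast
  thus ?thesis using that xi by blast
qed

lemma cancel_left: assumes "U t" "a \<in> clif n" "b \<in> clif n" "m t a = m t b" shows "a = b"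
proof -
  obtain ti where ti: "ti \<in> clif n" "m t ti = cl_one" "m ti t = cl_one" using U_inv[OF assms(1)] by blast
  have "a = m (m ti t) a" using ti assms by (simp add: mult_one_left)
  also have "\<dots> = m (m ti t) b" by (simp add: cl_mult_assoc assms(4))
  also have "\<dots> = b" using ti assms by (simp add: mult_one_left)
  finally show ?thesis .
qed

lemma cancel_right: assumes "U t" "a \<in> clif n" "b \<in> clif n" "m a t = m b t" shows "a = b"
proof -
  obtain ti where ti: "ti \<in> clif n" "m t ti = cl_one" "m ti t = cl_one" using U_inv[OF assms(1)] by blast
  have "a = m a (m t ti)" using ti assms by (simp add: mult_one_right)
  also have "\<dots> = m b (m t ti)" by (simp add: cl_mult_assoc[symmetric] assms(4))
  also have "\<dots> = b" using ti assms by (simp add: mult_one_right)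
  finally show ?thesis .
qed

lemma not_U_zero: "\<not> U (\<lambda>_. 0)"
proof
  assume "U (\<lambda>_. 0)"
  then obtain y where "m (\<lambda>_. 0) y = cl_one" unfolding cl_invertible_def by blast
  hence "(\<lambda>_. 0) = (cl_one :: nat set \<Rightarrow> 'a)" by (simp add: mult_zero_left')
  hence "(0::'a) = cl_one {}" by metis
  thus False unfolding cl_one_def by simp
qed

lemma U_gsp:
  assumes S: "S \<subseteq> N" "S \<noteq> {}"
  shows "U (gsp S a b) \<longleftrightarrow> a * a - blade_sign sg S S * b * b \<noteq> 0"
proof
  let ?s = "blade_sign sg S S"
  have ss: "?s * ?s = 1" using S by (intro bs_sq) (auto intro: finite_subset simp: sq)
  assume u: "U (gsp S a b)"
  show "a * a - ?s * b * b \<noteq> 0"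
  proof
    assume d: "a * a - ?s * b * b = 0"
    have "m (gsp S a b) (gsp S a (-b)) = gsp S (a * a - ?s * b * b) 0"
      by (subst gsp_mult[OF S]) (simp add: algebra_simps)
    also have "\<dots> = (\<lambda>_. 0)" unfolding d gsp_def by auto
    finally have z: "m (gsp S a b) (gsp S a (-b)) = (\<lambda>_. 0)" .
    obtain y where y: "y \<in> clif n" "m y (gsp S a b) = cl_one" using U_inv[OF u] by blast
    have "gsp S a (-b) = m (m y (gsp S a b)) (gsp S a (-b))" unfolding y(2) by (rule mult_one_left[OF gsp_clif[OF S(1)], symmetric])
    also have "\<dots> = (\<lambda>_. 0)" by (simp only: cl_mult_assoc z mult_zero_right')
    finally have "gsp S a (-b) = (\<lambda>_. 0)" .
    hence "gsp S a (-b) {} = 0" "gsp S a (-b) S = 0" by simp_all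
    hence "a = 0" "b = 0" using S(2) by (simp_all add: gsp_apply)
    hence "gsp S a b = (\<lambda>_. 0)" unfolding gsp_def by auto
    thus False using u not_U_zero by simp
  qed
next
  let ?s = "blade_sign sg S S"
  have ss: "?s * ?s = 1" using S by (intro bs_sq) (auto intro: finite_subset simp: sq)
  assume d: "a * a - ?s * b * b \<noteq> 0"
  let ?D = "a * a - ?s * b * b"
  let ?y = "gsp S (a / ?D) (- b / ?D)"
  have "m (gsp S a b) ?y = gsp S 1 0" "m ?y (gsp S a b) = gsp S 1 0"
  proof -
    have e1: "a * (a / ?D) + ?s * b * (- b / ?D) = 1" using inv_ar1[OF d] by simp
    have e2: "a * (- b / ?D) + b * (a / ?D) = 0" using inv_ar2[of a b ?D] by simp
    have e3: "a / ?D * a + ?s * (- b / ?D) * b = 1" using e1 by (simp add: mult_ac)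
    have e4: "a / ?D * b + - b / ?D * a = 0" using e2 by (simp add: mult_ac)
    show "m (gsp S a b) ?y = gsp S 1 0" "m ?y (gsp S a b) = gsp S 1 0"
      by (simp_all only: gsp_mult[OF S] e1 e2 e3 e4)
  qed
  thus "U (gsp S a b)" unfolding cl_invertible_def using one_gsp[OF S(2)] gsp_clif[OF S(1)] by metis
qed

end

context clf begin

lemma SP_iff: "x \<in> cl_scal_pseudo n \<longleftrightarrow> (\<exists>a b. x = gsp N a b)"
proof
  assume x: "x \<in> cl_scal_pseudo n"
  have "x = gsp N (x {}) (x N)"
  proof
    fix A show "x A = gsp N (x {}) (x N) A"
      using x unfolding cl_scal_pseudo_def clif_def gsp_def by auto
  qed
  thus "\<exists>a b. x = gsp N a b" by blast
next
  assume "\<exists>a b. x = gsp N a b"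
  then obtain a b where "x = gsp N a b" by blast
  thus "x \<in> cl_scal_pseudo n" unfolding cl_scal_pseudo_def using gsp_clif[of N n a b]
    by (auto simp: gsp_apply)
qed

lemma Z_iff: "x \<in> cl_center n \<longleftrightarrow> (\<exists>a b. x = gsp N a b \<and> (even n \<longrightarrow> b = 0))"
proof (cases "even n")
  case True
  have "x \<in> cl_center n \<longleftrightarrow> (\<exists>a. x = gsp N a 0)"
  proof
    assume x: "x \<in> cl_center n"
    have "x = gsp N (x {}) 0"
    proof
      fix A show "x A = gsp N (x {}) 0 A"
        using x True unfolding cl_center_def clif_def gsp_def by auto
    qed
    thus "\<exists>a. x = gsp N a 0" by blast
  next
    assume "\<exists>a. x = gsp N a 0"
    then obtain a where "x = gsp N a 0" by blast
    thus "x \<in> cl_center n" unfolding cl_center_def using True gsp_clif[of N n a 0]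
      by (auto simp: gsp_apply)
  qed
  thus ?thesis using True by auto
next
  case False
  thus ?thesis unfolding cl_center_def using SP_iff by auto
qed

lemma Z_SP: "x \<in> cl_center n \<Longrightarrow> x \<in> cl_scal_pseudo n"
  using Z_iff SP_iff by auto

lemma units_SP: "x \<in> cl_units sg n (cl_scal_pseudo n) \<longleftrightarrow> (\<exists>a b. x = gsp N a b \<and> a * a - es * b * b \<noteq> 0)"
  unfolding cl_units_def SP_iff es_def using U_gsp[OF _ N_ne] by auto

lemma units_Z: "x \<in> cl_units sg n (cl_center n) \<longleftrightarrow> (\<exists>a b. x = gsp N a b \<and> (even n \<longrightarrow> b = 0) \<and> a * a - es * b * b \<noteq> 0)"
  unfolding cl_units_def Z_iff es_def using U_gsp[OF _ N_ne] by auto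

lemma bsN:
  assumes D: "D \<subseteq> N"
  shows "blade_sign sg N D = (-1) ^ ((n - 1) * card D) * blade_sign sg D N"
proof -
  have f: "finite D" using D finite_subset by blast
  have sw0: "sig2 D N * sig2 N D = ((-1) ^ ((card N - 1) * card D) :: 'a)"
    by (rule sig2_swap_full[OF D]) simp
  have sw: "sig2 D N * sig2 N D = ((-1) ^ ((n - 1) * card D) :: 'a)"
    using sw0 by (simp only: card_lessThan)
  have "(sig2 N D :: 'a) = (sig2 D N * sig2 D N) * sig2 N D" by (simp add: sig2_sq)
  also have "\<dots> = sig2 D N * ((-1) ^ ((n - 1) * card D))" using sw by (simp add: mult.assoc)
  finally have s: "sig2 N D = ((-1) ^ ((n - 1) * card D)) * (sig2 D N :: 'a)" by (simp add: mult.commute)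
  have "N \<inter> D = D \<inter> N" by blast
  thus ?thesis using f s by (simp add: bs_sig mult_ac)
qed

lemma Z_central:
  assumes x: "x \<in> cl_center n" and y: "y \<in> clif n"
  shows "m x y = m y x"
proof -
  obtain a b where ab: "x = gsp N a b" "even n \<longrightarrow> b = 0" using x Z_iff by blast
  show ?thesis
  proof
    fix C
    show "m x y C = m y x C"
    proof (cases "C \<subseteq> N")
      case True
      let ?D = "sym_diff N C"
      have D: "?D \<subseteq> N" using True by auto
      have "b * blade_sign sg N ?D = blade_sign sg ?D N * b"
      proof (cases "even n")
        case True thus ?thesis using ab by simp
      next
        case False
        hence "even ((n - 1) * card ?D)" using n2 by auto
        thus ?thesis unfolding bsN[OF D] by simp
      qed
      hence h2: "b * blade_sign sg N ?D * y ?D = blade_sign sg ?D N * y ?D * b"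
        by (metis mult.commute mult.left_commute)
      show ?thesis unfolding ab(1) mult_gsp_left[OF subset_refl N_ne] mult_gsp_right[OF subset_refl N_ne]
        using True h2 by (simp add: mult.commute)
    next
      case False
      thus ?thesis unfolding ab(1) mult_gsp_left[OF subset_refl N_ne] mult_gsp_right[OF subset_refl N_ne] by simp
    qed
  qed
qed

lemma even_iff: "(x :: nat set \<Rightarrow> 'a) \<in> cl_even n \<longleftrightarrow> x \<in> clif n \<and> cl_hat x = x"
proof -
  have "(\<forall>A::nat set. odd (card A) \<longrightarrow> x A = 0) \<longleftrightarrow> cl_hat x = x"
  proof
    assume h: "\<forall>A::nat set. odd (card A) \<longrightarrow> x A = 0"
    show "cl_hat x = x" unfolding cl_hat_def
    proof
      fix A :: "nat set" show "(-1) ^ card A * x A = x A" using h by (cases "even (card A)") auto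
    qed
  next
    assume h: "cl_hat x = x"
    show "\<forall>A::nat set. odd (card A) \<longrightarrow> x A = 0"
    proof (intro allI impI)
      fix A :: "nat set" assume "odd (card A)"
      hence "- x A = x A" using fun_cong[OF h, of A] unfolding cl_hat_def by simp
      thus "x A = 0" by (simp add: eq_neg_iff_add_eq_0[symmetric] add_eq_0_iff)
    qed
  qed
  thus ?thesis unfolding cl_even_def by auto
qed

lemma odd_iff: "(x :: nat set \<Rightarrow> 'a) \<in> cl_odd n \<longleftrightarrow> x \<in> clif n \<and> cl_hat x = (\<lambda>A. - x A)"
proof -
  have "(\<forall>A::nat set. even (card A) \<longrightarrow> x A = 0) \<longleftrightarrow> cl_hat x = (\<lambda>A. - x A)"
  proof
    assume h: "\<forall>A::nat set. even (card A) \<longrightarrow> x A = 0"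
    show "cl_hat x = (\<lambda>A. - x A)" unfolding cl_hat_def
    proof
      fix A :: "nat set" show "(-1) ^ card A * x A = - x A" using h by (cases "even (card A)") auto
    qed
  next
    assume h: "cl_hat x = (\<lambda>A. - x A)"
    show "\<forall>A::nat set. even (card A) \<longrightarrow> x A = 0"
    proof (intro allI impI)
      fix A :: "nat set" assume "even (card A)"
      hence "- x A = x A" using fun_cong[OF h, of A] unfolding cl_hat_def by simp
      thus "x A = 0" by (simp add: eq_neg_iff_add_eq_0[symmetric] add_eq_0_iff)
    qed
  qed
  thus ?thesis unfolding cl_odd_def by auto
qed

end

lemma odd_alg:
  fixes e a b :: "'a::field_char_0"
  assumes e: "e * e = 1" and h: "a * a - e * b * b = 1" and c: "(1 + a) * (1 + a) - e * b * b = 0"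
  shows "(e * b) * (e * b) - e * (1 - a) * (1 - a) \<noteq> 0"
proof
  assume d: "(e * b) * (e * b) - e * (1 - a) * (1 - a) = 0"
  have "(e * e) * (b * b) = e * ((1 - a) * (1 - a))" using d by (simp add: algebra_simps)
  hence bb: "b * b = e * ((1 - a) * (1 - a))" using e by simp
  have "e * b * b = e * (b * b)" by (simp add: mult.assoc)
  also have "\<dots> = (e * e) * ((1 - a) * (1 - a))" unfolding bb by (simp add: mult.assoc)
  finally have ebb0: "e * b * b = (e * e) * ((1 - a) * (1 - a))" .
  hence ebb: "e * b * b = (1 - a) * (1 - a)" using e by simp
  have "(1 + a) * (1 + a) = (1 - a) * (1 - a)" using c ebb by simp
  hence "4 * a = 0" by (simp add: algebra_simps)
  hence a0: "a = 0" by simp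
  have "e * b * b = 1" using ebb a0 by simp
  thus False using h a0 by simp
qed

context clf begin

lemma cancel_aux: "m a b = cl_one \<Longrightarrow> x \<in> clif n \<Longrightarrow> m a (m b x) = x"
  by (simp add: cl_mult_assoc[symmetric] mult_one_left)

lemma hat_gspN: "cl_hat (gsp N a b) = gsp N a ((-1) ^ n * b)"
  by (simp add: hat_gsp)

lemma rev_gspN: "cl_rev (gsp N a b) = gsp N a ((-1) ^ (n * (n - 1) div 2) * b)"
  by (simp add: rev_gsp)

lemma gspN_mult: "m (gsp N a b) (gsp N c d) = gsp N (a * c + es * b * d) (a * d + b * c)"
  using gsp_mult[OF subset_refl N_ne] unfolding es_def by (simp add: mult_ac)

lemma inv_SP:
  assumes "V \<in> cl_scal_pseudo n" "U V"
  obtains Vi where "Vi \<in> cl_scal_pseudo n" "m Vi V = cl_one"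
proof -
  obtain a b where ab: "V = gsp N a b" using assms SP_iff by blast
  have d: "a * a - es * b * b \<noteq> 0" using assms(2) U_gsp[OF subset_refl N_ne] ab unfolding es_def by simp
  let ?D = "a * a - es * b * b"
  have e1: "a / ?D * a + es * (- b / ?D) * b = 1" using inv_ar1[OF d] by (simp add: mult_ac)
  have e2: "a / ?D * b + - b / ?D * a = 0" using inv_ar2[of a b ?D] by (simp add: mult_ac)
  have "m (gsp N (a / ?D) (- b / ?D)) V = cl_one"
    unfolding ab gspN_mult e1 e2 one_gsp[OF N_ne] ..
  moreover have "gsp N (a / ?D) (- b / ?D) \<in> cl_scal_pseudo n" using SP_iff by blast
  ultimately show ?thesis using that by blast
qed

lemma SP_mult: assumes "x \<in> cl_scal_pseudo n" "y \<in> cl_scal_pseudo n" shows "m x y \<in> cl_scal_pseudo n"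
proof -
  obtain a b c d where "x = gsp N a b" "y = gsp N c d" using assms SP_iff by meson
  thus ?thesis using SP_iff gspN_mult by metis
qed

lemma SP_hat: assumes "(x :: nat set \<Rightarrow> 'a) \<in> cl_scal_pseudo n" shows "cl_hat x \<in> cl_scal_pseudo n"
proof -
  obtain a b where "x = gsp N a b" using assms SP_iff by meson
  thus ?thesis using SP_iff hat_gspN by metis
qed

lemma SP_rev: assumes "(x :: nat set \<Rightarrow> 'a) \<in> cl_scal_pseudo n" shows "cl_rev x \<in> cl_scal_pseudo n"
proof -
  obtain a b where "x = gsp N a b" using assms SP_iff by meson
  thus ?thesis using SP_iff rev_gspN by metis
qed

lemma one_units_Z: "cl_one \<in> cl_units sg n (cl_center n)"
proof -
  have "cl_one = gsp N 1 0 \<and> (even n \<longrightarrow> (0::'a) = 0) \<and> 1 * 1 - es * 0 * 0 \<noteq> (0::'a)" using one_gsp[OF N_ne] by simp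
  thus ?thesis unfolding units_Z by blast
qed

lemma P_intro:
  assumes "W \<in> cl_units sg n (cl_center n)" "E \<in> cl_units sg n (cl_even n) \<or> E \<in> cl_units sg n (cl_odd n)"
  shows "m W E \<in> cl_P sg n"
  unfolding cl_P_def using assms by blast

lemma P_intro1:
  assumes "T \<in> cl_units sg n (cl_even n) \<or> T \<in> cl_units sg n (cl_odd n)"
  shows "T \<in> cl_P sg n"
proof -
  have "T \<in> clif n" using assms unfolding cl_units_def cl_even_def cl_odd_def by auto
  hence "T = m cl_one T" by (simp add: mult_one_left)
  thus ?thesis using P_intro[OF one_units_Z assms] by simp
qed

lemma scal_gsp_right: "x \<in> clif n \<Longrightarrow> m x (gsp N a 0) = (\<lambda>C. a * x C)"
  by (rule ext) (auto simp: mult_gsp_right[OF subset_refl N_ne] clif_def mult.commute)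

lemma even_case:
  assumes ev: "even n" and Tc: "T \<in> clif n" and UT: "U T" and MS: "M \<in> cl_scal_pseudo n"
    and hT: "cl_hat T = m T M"
  shows "T \<in> cl_P sg n"
proof -
  obtain \<alpha> \<beta> where M: "M = gsp N \<alpha> \<beta>" using MS SP_iff by blast
  have hM: "cl_hat M = M" unfolding M hat_gspN using ev by simp
  have Mc: "M \<in> clif n" unfolding M by (rule gsp_clif) simp
  have "m T cl_one = m T (m M M)"
  proof -
    have "m T cl_one = T" using Tc by (simp add: mult_one_right)
    also have "\<dots> = cl_hat (cl_hat T)" by (simp add: hat_hat)
    also have "\<dots> = m (m T M) M" unfolding hT hat_mult hM ..
    finally show ?thesis by (simp add: cl_mult_assoc)
  qed
  hence MM: "m M M = cl_one" using cancel_left[OF UT one_clif mult_clif] by metis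
  hence "gsp N (\<alpha> * \<alpha> + es * \<beta> * \<beta>) (\<alpha> * \<beta> + \<beta> * \<alpha>) = gsp N 1 0"
    unfolding M gspN_mult one_gsp[OF N_ne] .
  hence e1: "\<alpha> * \<alpha> + es * \<beta> * \<beta> = 1" and e2: "\<alpha> * \<beta> + \<beta> * \<alpha> = 0"
    using gsp_eq_iff[OF N_ne] by blast+
  from e2 have "2 * (\<alpha> * \<beta>) = 0" by (simp add: algebra_simps)
  hence "\<alpha> = 0 \<or> \<beta> = 0" by simp
  thus ?thesis
  proof
    assume b0: "\<beta> = 0"
    hence "\<alpha> * \<alpha> = 1" using e1 by simp
    hence "\<alpha> = 1 \<or> \<alpha> = -1" by (rule sq1_cases)
    have hT2: "cl_hat T = (\<lambda>C. \<alpha> * T C)" unfolding hT M b0 using scal_gsp_right[OF Tc] .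
    show ?thesis
    proof (rule P_intro1)
      show "T \<in> cl_units sg n (cl_even n) \<or> T \<in> cl_units sg n (cl_odd n)"
        using \<open>\<alpha> = 1 \<or> \<alpha> = -1\<close> hT2 Tc UT unfolding cl_units_def even_iff odd_iff by auto
    qed
  next
    assume a0: "\<alpha> = 0"
    hence ebb: "es * \<beta> * \<beta> = 1" using e1 by simp
    let ?f = "gsp N 0 \<beta>"
    have Mf: "M = ?f" unfolding M a0 ..
    have ff: "m ?f ?f = cl_one" using MM unfolding Mf .
    have fc: "?f \<in> clif n" by (rule gsp_clif) simp
    have comm: "m ?f T = m (cl_hat T) ?f"
    proof
      fix C
      show "m ?f T C = m (cl_hat T) ?f C"
      proof (cases "C \<subseteq> N")
        case True
        let ?D = "sym_diff N C"
        have D: "?D \<subseteq> N" using True by auto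
        have pw: "((-1::'a) ^ ((n - 1) * card ?D)) = (-1) ^ card ?D"
        proof -
          have "odd (n - 1)" using ev n2 by auto
          hence "((-1::'a) ^ (n - 1)) = -1" by simp
          thus ?thesis by (simp add: power_mult)
        qed
        show ?thesis
          unfolding mult_gsp_left[OF subset_refl N_ne] mult_gsp_right[OF subset_refl N_ne]
          using True bsN[OF D] pw by (simp add: cl_hat_def mult_ac)
      next
        case False
        thus ?thesis unfolding mult_gsp_left[OF subset_refl N_ne] mult_gsp_right[OF subset_refl N_ne] by simp
      qed
    qed
    have fT: "m ?f T = T"
    proof -
      have "m ?f T = m (m T ?f) ?f" unfolding comm hT Mf ..
      also have "\<dots> = T" using ff Tc by (simp add: cl_mult_assoc mult_one_right)
      finally show ?thesis .
    qed
    let ?g = "gsp N 1 (- \<beta>)"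
    have gT: "m ?g T = (\<lambda>_. 0)"
    proof
      fix C
      have "m ?f T C = T C" using fT by simp
      thus "m ?g T C = 0"
        using Tc unfolding mult_gsp_left[OF subset_refl N_ne] by (auto simp: clif_def split: if_splits)
    qed
    obtain Ti where Ti: "m T Ti = cl_one" using U_inv[OF UT] by blast
    have "?g = m ?g (m T Ti)" unfolding Ti by (rule mult_one_right[symmetric]) (rule gsp_clif, simp)
    also have "\<dots> = (\<lambda>_. 0)" by (simp add: cl_mult_assoc[symmetric] gT mult_zero_left')
    finally have "?g {} = 0" by simp
    thus ?thesis by (simp add: gsp_apply)
  qed
qed

end

context clf begin

lemma odd_case:
  assumes od: "odd n" and Tc: "T \<in> clif n" and UT: "U T" and MS: "M \<in> cl_scal_pseudo n"
    and hT: "cl_hat T = m T M"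
  shows "T \<in> cl_P sg n"
proof -
  obtain \<alpha> \<beta> where M: "M = gsp N \<alpha> \<beta>" using MS SP_iff by blast
  have hM: "cl_hat M = gsp N \<alpha> (- \<beta>)" unfolding M hat_gspN using od by simp
  have MZ: "M \<in> cl_center n" unfolding cl_center_def using od MS by simp
  have Mc: "M \<in> clif n" unfolding M by (rule gsp_clif) simp
  have "m T cl_one = m T (m M (cl_hat M))"
  proof -
    have "m T cl_one = T" using Tc by (simp add: mult_one_right)
    also have "\<dots> = cl_hat (cl_hat T)" by (simp add: hat_hat)
    also have "\<dots> = m (m T M) (cl_hat M)" unfolding hT hat_mult ..
    finally show ?thesis by (simp add: cl_mult_assoc)
  qed
  hence MM: "m M (cl_hat M) = cl_one" using cancel_left[OF UT one_clif mult_clif] by metis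
  hence "m M (gsp N \<alpha> (- \<beta>)) = cl_one" unfolding hM .
  hence "gsp N (\<alpha> * \<alpha> + es * \<beta> * (- \<beta>)) (\<alpha> * (- \<beta>) + \<beta> * \<alpha>) = gsp N 1 0"
    unfolding M gspN_mult one_gsp[OF N_ne] .
  hence "\<alpha> * \<alpha> + es * \<beta> * (- \<beta>) = 1"
    using gsp_eq_iff[OF N_ne] by blast
  hence e1: "\<alpha> * \<alpha> - es * \<beta> * \<beta> = 1" by simp
  obtain W where W: "W \<in> cl_scal_pseudo n" "U W" "m M W = cl_hat W"
  proof (cases "(1 + \<alpha>) * (1 + \<alpha>) - es * \<beta> * \<beta> = 0")
    case False
    let ?W = "gsp N (1 + \<alpha>) (- \<beta>)"
    have "U ?W" using U_gsp[OF subset_refl N_ne] False unfolding es_def by simp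
    moreover have "m M ?W = cl_hat ?W"
    proof -
      have "\<alpha> * (1 + \<alpha>) + es * \<beta> * - \<beta> = 1 + \<alpha>" using e1 by (simp add: algebra_simps)
      moreover have "\<alpha> * - \<beta> + \<beta> * (1 + \<alpha>) = (-1) ^ n * - \<beta>" using od by (simp add: algebra_simps)
      ultimately show ?thesis unfolding M gspN_mult hat_gspN by simp
    qed
    ultimately show ?thesis using that SP_iff by blast
  next
    case True
    let ?W = "gsp N (es * \<beta>) (1 - \<alpha>)"
    have "(es * \<beta>) * (es * \<beta>) - es * (1 - \<alpha>) * (1 - \<alpha>) \<noteq> 0"
      by (rule odd_alg[OF es_sq e1 True])
    hence "U ?W" using U_gsp[OF subset_refl N_ne] unfolding es_def by (simp add: mult.assoc)
    moreover have "m M ?W = cl_hat ?W"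
    proof -
      have "\<alpha> * (es * \<beta>) + es * \<beta> * (1 - \<alpha>) = es * \<beta>" by (simp add: algebra_simps)
      moreover have "\<alpha> * (1 - \<alpha>) + \<beta> * (es * \<beta>) = (-1) ^ n * (1 - \<alpha>)" using od e1 by (simp add: algebra_simps)
      ultimately show ?thesis unfolding M gspN_mult hat_gspN by simp
    qed
    ultimately show ?thesis using that SP_iff by blast
  qed
  have WZ: "W \<in> cl_center n" unfolding cl_center_def using od W by simp
  have Wc: "W \<in> clif n" using W(2) U_clif by blast
  obtain Wi where Wi: "Wi \<in> clif n" "m W Wi = cl_one" "U Wi" using U_inv[OF W(2)] by blast
  define E where "E = m Wi T"
  have Ec: "E \<in> clif n" unfolding E_def by (rule mult_clif)
  have UE: "U E" unfolding E_def using U_mult[OF Wi(3) UT] .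
  have WE: "m W E = T" unfolding E_def using Wi Tc by (simp add: cancel_aux)
  have "m (cl_hat W) (cl_hat E) = m (cl_hat W) E"
  proof -
    have "m (cl_hat W) (cl_hat E) = cl_hat T" unfolding WE[symmetric] hat_mult ..
    also have "\<dots> = m (m W E) M" unfolding hT WE ..
    also have "\<dots> = m W (m M E)" using Z_central[OF MZ Ec] by (simp add: cl_mult_assoc)
    also have "\<dots> = m (m M W) E" using Z_central[OF MZ Wc] by (simp add: cl_mult_assoc)
    also have "\<dots> = m (cl_hat W) E" unfolding W(3) ..
    finally show ?thesis .
  qed
  hence hE: "cl_hat E = E" using cancel_left[OF U_hat[OF W(2)] hat_clif[OF Ec] Ec] by blast
  have "W \<in> cl_units sg n (cl_center n)" unfolding cl_units_def using WZ W(2) by blast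
  moreover have "E \<in> cl_units sg n (cl_even n)" unfolding cl_units_def even_iff using Ec hE UE by blast
  ultimately have "m W E \<in> cl_P sg n" using P_intro by blast
  thus ?thesis unfolding WE .
qed

lemma AB_P:
  assumes "T \<in> cl_A' sg n \<inter> cl_B' sg n"
  shows "T \<in> cl_P sg n"
proof -
  have Tc: "T \<in> clif n" and UT: "U T" using assms unfolding cl_A'_def cl_units_def by auto
  let ?U0 = "m (cl_rev T) T"
  let ?V = "m (cl_hat (cl_rev T)) T"
  have U0S: "?U0 \<in> cl_scal_pseudo n" using assms unfolding cl_A'_def cl_units_def by auto
  have VS: "?V \<in> cl_scal_pseudo n" and UV: "U ?V" using assms unfolding cl_B'_def cl_units_def by auto
  obtain Ti where Ti: "Ti \<in> clif n" "m T Ti = cl_one" "m Ti T = cl_one" using U_inv[OF UT] by blast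
  obtain Vi where Vi: "Vi \<in> cl_scal_pseudo n" "m Vi ?V = cl_one" using inv_SP[OF VS UV] by blast
  define M where "M = m Ti (cl_hat T)"
  have hTc: "cl_hat T \<in> clif n" using hat_clif[OF Tc] .
  have hT: "cl_hat T = m T M" unfolding M_def using cancel_aux[OF Ti(2) hTc] by simp
  have rT: "cl_rev T = m ?U0 Ti" using Ti rev_clif[OF Tc] by (simp add: cl_mult_assoc mult_one_right)
  have hrT: "cl_hat (cl_rev T) = m (cl_hat ?U0) (cl_hat Ti)" by (subst rT) (rule hat_mult)
  have hTi: "m (cl_hat Ti) (cl_hat T) = cl_one" using Ti(3) by (metis hat_mult hat_one)
  have "M = m Vi (cl_hat ?U0)"
  proof -
    have "M = m (m Vi ?V) M" unfolding Vi(2) M_def by (rule mult_one_left[OF mult_clif, symmetric])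
    also have "\<dots> = m Vi (m (cl_hat ?U0) (m (cl_hat Ti) (m (m T Ti) (cl_hat T))))"
      unfolding hrT M_def by (simp add: cl_mult_assoc)
    also have "\<dots> = m Vi (cl_hat ?U0)"
      unfolding Ti(2) mult_one_left[OF hTc] hTi mult_one_right[OF hat_clif[OF mult_clif]] ..
    finally show ?thesis .
  qed
  hence MS: "M \<in> cl_scal_pseudo n" using SP_mult[OF Vi(1) SP_hat[OF U0S]] by simp
  show ?thesis
  proof (cases "even n")
    case True thus ?thesis using even_case Tc UT MS hT by blast
  next
    case False thus ?thesis using odd_case Tc UT MS hT by blast
  qed
qed

end

context clf begin

lemma Z_mult: "x \<in> cl_center n \<Longrightarrow> y \<in> cl_center n \<Longrightarrow> m x y \<in> cl_center n"
  unfolding Z_iff using gspN_mult by fastforce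

lemma Z_hat: "(x :: nat set \<Rightarrow> 'a) \<in> cl_center n \<Longrightarrow> cl_hat x \<in> cl_center n"
  unfolding Z_iff using hat_gspN by fastforce

lemma Z_rev: "(x :: nat set \<Rightarrow> 'a) \<in> cl_center n \<Longrightarrow> cl_rev x \<in> cl_center n"
  unfolding Z_iff using rev_gspN by fastforce

lemma inv_Z:
  assumes "W \<in> cl_center n" "U W"
  obtains Wi where "Wi \<in> cl_center n" "m Wi W = cl_one" "U Wi"
proof -
  obtain a b where ab: "W = gsp N a b" "even n \<longrightarrow> b = 0" using assms Z_iff by blast
  have d: "a * a - es * b * b \<noteq> 0" using assms(2) U_gsp[OF subset_refl N_ne] ab unfolding es_def by simp
  let ?D = "a * a - es * b * b"
  have e1: "a / ?D * a + es * (- b / ?D) * b = 1" using inv_ar1[OF d] by (simp add: mult_ac)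
  have e2: "a / ?D * b + - b / ?D * a = 0" using inv_ar2[of a b ?D] by (simp add: mult_ac)
  let ?Wi = "gsp N (a / ?D) (- b / ?D)"
  have 1: "m ?Wi W = cl_one"
    unfolding ab gspN_mult e1 e2 one_gsp[OF N_ne] ..
  have 2: "?Wi \<in> cl_center n" unfolding Z_iff
    by (rule exI, rule exI, rule conjI[OF refl]) (use ab(2) in simp)
  have 3: "m W ?Wi = cl_one" using 1 Z_central[OF 2 gsp_clif[of N n]] ab by simp
  have "U ?Wi" unfolding cl_invertible_def using 1 3 gsp_clif[of N n] assms U_clif by blast
  thus ?thesis using that 1 2 by blast
qed

lemma Qp_sub_AB:
  assumes T: "T \<in> cl_Q' sg n"
  shows "T \<in> cl_A' sg n \<inter> cl_B' sg n"
proof -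
  obtain W T' where WT: "T = m W T'" "W \<in> cl_units sg n (cl_center n)"
    "T' \<in> cl_units sg n (cl_even n) \<or> T' \<in> cl_units sg n (cl_odd n)"
    using T unfolding cl_Q'_def cl_P_def by blast
  let ?U0 = "m (cl_rev T) T"
  have U0: "?U0 \<in> cl_units sg n (cl_scal_pseudo n)" using T unfolding cl_Q'_def by blast
  have WZ: "W \<in> cl_center n" and UW: "U W" using WT(2) unfolding cl_units_def by auto
  have UT': "U T'" and T'c: "T' \<in> clif n" using WT(3) unfolding cl_units_def cl_even_def cl_odd_def by auto
  have UT: "U T" unfolding WT(1) by (rule U_mult[OF UW UT'])
  have Tc: "T \<in> clif n" unfolding WT(1) by (rule mult_clif)
  obtain \<epsilon> :: 'a where eps: "\<epsilon> * \<epsilon> = 1" "cl_hat T' = (\<lambda>A. \<epsilon> * T' A)"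
  proof (cases "T' \<in> cl_units sg n (cl_even n)")
    case True
    hence "cl_hat T' = (\<lambda>A. 1 * T' A)" unfolding cl_units_def even_iff by simp
    thus ?thesis using that[of 1] by simp
  next
    case False
    hence "cl_hat T' = (\<lambda>A. - T' A)" using WT(3) unfolding cl_units_def odd_iff by blast
    hence "cl_hat T' = (\<lambda>A. (-1) * T' A)" by simp
    thus ?thesis using that[of "-1"] by simp
  qed
  obtain Wi where Wi: "Wi \<in> cl_center n" "m Wi W = cl_one" "U Wi" using inv_Z[OF WZ UW] by blast
  define K where "K = m (cl_hat W) Wi"
  have KZ: "K \<in> cl_center n" unfolding K_def by (rule Z_mult[OF Z_hat[OF WZ] Wi(1)])
  have UK: "U K" unfolding K_def by (rule U_mult[OF U_hat[OF UW] Wi(3)])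
  have T'e: "T' = m Wi T" unfolding WT(1) using Wi(2) T'c by (simp add: cancel_aux)
  have hT: "cl_hat T = (\<lambda>C. \<epsilon> * m K T C)"
    unfolding WT(1) hat_mult eps(2) mult_scal_right K_def
    by (simp add: T'e[symmetric] cl_mult_assoc WT(1)[symmetric])
  have rKZ: "cl_rev K \<in> cl_center n" using Z_rev[OF KZ] .
  have rKc: "cl_rev K \<in> clif n" using rKZ unfolding cl_center_def cl_scal_pseudo_def by (auto split: if_splits)
  have V: "m (cl_hat (cl_rev T)) T = (\<lambda>C. \<epsilon> * m ?U0 (cl_rev K) C)"
  proof -
    have "m (cl_hat (cl_rev T)) T = m (cl_rev (cl_hat T)) T" by (simp add: hat_rev)
    also have "\<dots> = (\<lambda>C. \<epsilon> * m (cl_rev T) (m (cl_rev K) T) C)"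
      unfolding hT rev_scal mult_scal_left rev_mult by (simp add: cl_mult_assoc)
    also have "\<dots> = (\<lambda>C. \<epsilon> * m ?U0 (cl_rev K) C)"
      using Z_central[OF rKZ Tc] by (simp add: cl_mult_assoc)
    finally show ?thesis .
  qed
  obtain a b where ab: "m ?U0 (cl_rev K) = gsp N a b" "a * a - es * b * b \<noteq> 0"
  proof -
    have "m ?U0 (cl_rev K) \<in> cl_units sg n (cl_scal_pseudo n)"
      unfolding cl_units_def using U0 SP_mult Z_SP[OF rKZ] U_mult U_rev[OF UK] unfolding cl_units_def by blast
    thus ?thesis using that units_SP by blast
  qed
  have "m (cl_hat (cl_rev T)) T = gsp N (\<epsilon> * a) (\<epsilon> * b)" unfolding V ab(1) gsp_def by auto
  moreover have "(\<epsilon> * a) * (\<epsilon> * a) - es * (\<epsilon> * b) * (\<epsilon> * b) \<noteq> 0"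
  proof -
    have "(\<epsilon> * a) * (\<epsilon> * a) - es * (\<epsilon> * b) * (\<epsilon> * b) = (\<epsilon> * \<epsilon>) * (a * a - es * b * b)"
      by (simp add: algebra_simps)
    thus ?thesis using eps(1) ab(2) by simp
  qed
  ultimately have "m (cl_hat (cl_rev T)) T \<in> cl_units sg n (cl_scal_pseudo n)" using units_SP by blast
  thus ?thesis unfolding cl_A'_def cl_B'_def cl_units_def using Tc UT U0 unfolding cl_units_def by blast
qed

lemma part1: "cl_A' sg n \<inter> cl_B' sg n = cl_Q' sg n"
proof
  show "cl_A' sg n \<inter> cl_B' sg n \<subseteq> cl_Q' sg n"
  proof
    fix T assume T: "T \<in> cl_A' sg n \<inter> cl_B' sg n"
    thus "T \<in> cl_Q' sg n" using AB_P[OF T] unfolding cl_Q'_def cl_A'_def by blast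
  qed
qed (use Qp_sub_AB in blast)

lemma Q_sub_Qp: "cl_Q sg n \<subseteq> cl_Q' sg n"
  unfolding cl_Q_def cl_Q'_def cl_units_def using Z_SP by blast

end

lemma mod4_2: "(n::nat) mod 4 = 2 \<Longrightarrow> odd (n * (n - 1) div 2)"
proof -
  assume "n mod 4 = 2"
  then obtain k where k: "n = 4 * k + 2" using div_mult_mod_eq[of n 4] by (metis mult.commute)
  have p: "n - 1 = 4 * k + 1" unfolding k by simp
  have h: "n * (n - 1) = 2 * ((2 * k + 1) * (4 * k + 1))" unfolding p unfolding k by (simp add: algebra_simps)
  have "n * (n - 1) div 2 = 2 * ((2 * k + 1) * (4 * k + 1)) div 2" by (simp only: h)
  also have "\<dots> = (2 * k + 1) * (4 * k + 1)" by simp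
  finally show ?thesis by simp
qed

lemma mod4_0: "(n::nat) mod 4 = 0 \<Longrightarrow> even (n * (n - 1) div 2)"
proof -
  assume "n mod 4 = 0"
  then obtain k where k: "n = 4 * k" by blast
  define p where "p = n - 1"
  have h: "n * p = 2 * (2 * k * p)" unfolding k by simp
  have "n * p div 2 = 2 * (2 * k * p) div 2" by (simp only: h)
  also have "\<dots> = 2 * k * p" by simp
  finally have "n * p div 2 = 2 * k * p" .
  thus ?thesis unfolding p_def by simp
qed

context clf begin

lemma Q_eq_odd: "odd n \<Longrightarrow> cl_Q' sg n = cl_Q sg n"
  unfolding cl_Q_def cl_Q'_def cl_center_def by simp

lemma rev_U0: "cl_rev (m (cl_rev T) T) = m (cl_rev T) T"
  by (simp add: rev_mult rev_rev)

lemma Q_eq_2: assumes "n mod 4 = 2" shows "cl_Q' sg n = cl_Q sg n"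
proof
  show "cl_Q' sg n \<subseteq> cl_Q sg n"
  proof
    fix T assume T: "T \<in> cl_Q' sg n"
    let ?U0 = "m (cl_rev T) T"
    have U0: "?U0 \<in> cl_scal_pseudo n" "U ?U0" using T unfolding cl_Q'_def cl_units_def by auto
    obtain a b where ab: "?U0 = gsp N a b" using U0 SP_iff by blast
    have r: "((-1::'a) ^ (n * (n - 1) div 2)) = -1" using mod4_2[OF assms] by simp
    have "gsp N a b = gsp N a (- b)" using rev_U0[of T] unfolding ab rev_gspN r by simp
    hence "b = - b" using gsp_eq_iff[OF N_ne] by blast
    hence "b = 0" by simp
    have ev: "even n" using assms by presburger
    have "?U0 \<in> cl_center n" unfolding Z_iff using ab \<open>b = 0\<close> by blast
    thus "T \<in> cl_Q sg n" using T U0 unfolding cl_Q_def cl_Q'_def cl_units_def by blast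
  qed
qed (rule Q_sub_Qp)

lemma U_small: "a * a - es * b * b \<noteq> 0 \<Longrightarrow> U (gsp N a b)"
  using U_gsp[OF subset_refl N_ne] unfolding es_def by simp

lemma part0_neq:
  assumes "n mod 4 = 0"
  shows "cl_Q sg n \<noteq> cl_Q' sg n"
proof -
  have ev: "even n" using assms by presburger
  let ?T = "gsp N 2 1 :: nat set \<Rightarrow> 'a"
  have Tc: "?T \<in> clif n" by (rule gsp_clif) simp
  have hT: "cl_hat ?T = ?T" unfolding hat_gspN using ev by simp
  have "2 * 2 - es * 1 * 1 \<noteq> (0::'a)" using es_cases by auto
  hence UT: "U ?T" by (rule U_small)
  have "?T \<in> cl_units sg n (cl_even n)" unfolding cl_units_def using even_iff Tc hT UT by blast
  hence TP: "?T \<in> cl_P sg n" using P_intro1 by blast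
  have rT: "cl_rev ?T = ?T" unfolding rev_gspN using mod4_0[OF assms] by simp
  have U0: "m (cl_rev ?T) ?T = gsp N (4 + es) 4" unfolding rT gspN_mult by simp
  have "(4 + es) * (4 + es) - es * 4 * 4 \<noteq> (0::'a)" using es_cases by auto
  hence "m (cl_rev ?T) ?T \<in> cl_units sg n (cl_scal_pseudo n)" unfolding U0 units_SP by blast
  hence TQ': "?T \<in> cl_Q' sg n" unfolding cl_Q'_def using TP by blast
  have "m (cl_rev ?T) ?T \<notin> cl_center n"
  proof
    assume "m (cl_rev ?T) ?T \<in> cl_center n"
    then obtain a b where "gsp N (4 + es) 4 = gsp N a b" "b = 0" unfolding U0 Z_iff using ev by blast
    hence "(4::'a) = 0" using gsp_eq_iff[OF N_ne] by blast
    thus False by simp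
  qed
  hence "?T \<notin> cl_Q sg n" unfolding cl_Q_def cl_units_def by blast
  thus ?thesis using TQ' by blast
qed

end

context clf begin
lemma part_n4:
  assumes n4: "n = 4"
  shows "cl_Q' sg n = cl_P sg n"
proof
  show "cl_Q' sg n \<subseteq> cl_P sg n" unfolding cl_Q'_def by blast
next
  show "cl_P sg n \<subseteq> cl_Q' sg n"
  proof
    fix T assume TP: "T \<in> cl_P sg n"
    obtain W T' where WT: "T = m W T'" "W \<in> cl_units sg n (cl_center n)"
      "T' \<in> cl_units sg n (cl_even n) \<or> T' \<in> cl_units sg n (cl_odd n)"
      using TP unfolding cl_P_def by blast
    have ev: "even n" using n4 by simp
    obtain w where w: "W = gsp N w 0" using WT(2) ev unfolding units_Z by blast
    have UW: "U W" using WT(2) unfolding cl_units_def by auto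
    have UT': "U T'" and T'c: "T' \<in> clif n" using WT(3) unfolding cl_units_def cl_even_def cl_odd_def by auto
    have UT: "U T" unfolding WT(1) by (rule U_mult[OF UW UT'])
    have Tc: "T \<in> clif n" unfolding WT(1) by (rule mult_clif)
    obtain \<epsilon> :: 'a where eps: "\<epsilon> * \<epsilon> = 1" "cl_hat T' = (\<lambda>A. \<epsilon> * T' A)"
    proof (cases "T' \<in> cl_units sg n (cl_even n)")
      case True
      hence "cl_hat T' = (\<lambda>A. 1 * T' A)" unfolding cl_units_def even_iff by simp
      thus ?thesis using that[of 1] by simp
    next
      case False
      hence "cl_hat T' = (\<lambda>A. - T' A)" using WT(3) unfolding cl_units_def odd_iff by blast
      hence "cl_hat T' = (\<lambda>A. (-1) * T' A)" by simp
      thus ?thesis using that[of "-1"] by simp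
    qed
    have hW: "cl_hat W = W" unfolding w hat_gspN by simp
    have hT: "cl_hat T = (\<lambda>C. \<epsilon> * T C)"
      unfolding WT(1) hat_mult hW eps(2) mult_scal_right ..
    let ?U0 = "m (cl_rev T) T"
    have U0c: "?U0 \<in> clif n" by (rule mult_clif)
    have UU0: "U ?U0" by (rule U_mult[OF U_rev[OF UT] UT])
    have hU0: "cl_hat ?U0 = ?U0"
    proof -
      have "cl_hat ?U0 = m (cl_rev (cl_hat T)) (cl_hat T)" by (simp add: hat_mult hat_rev)
      also have "\<dots> = (\<lambda>C. (\<epsilon> * \<epsilon>) * ?U0 C)" unfolding hT rev_scal mult_scal_left mult_scal_right
        by (simp add: mult.assoc)
      finally show ?thesis using eps(1) by simp
    qed
    have rU0: "cl_rev ?U0 = ?U0" by (rule rev_U0)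
    have "?U0 \<in> cl_scal_pseudo n" unfolding cl_scal_pseudo_def
    proof (intro CollectI conjI allI impI)
      show "?U0 \<in> clif n" by (rule U0c)
      fix A assume A: "A \<noteq> {} \<and> A \<noteq> N"
      show "?U0 A = 0"
      proof (cases "A \<subseteq> N")
        case False thus ?thesis using U0c unfolding clif_def by blast
      next
        case True
        have fA: "finite A" using True finite_subset by blast
        have "card A \<noteq> 0" using A fA by simp
        moreover have "card A \<noteq> 4" using A True card_subset_eq[of N A] n4 by auto
        moreover have "card A \<le> 4" using card_mono[OF _ True] n4 by simp
        ultimately have c: "card A = 1 \<or> card A = 2 \<or> card A = 3" by auto
        show ?thesis
        proof (cases "card A = 2")
          case True
          have "cl_rev ?U0 A = - ?U0 A" unfolding cl_rev_def True by simp
          thus ?thesis using rU0 by (metis add_eq_0_iff eq_neg_iff_add_eq_0 mult_2 mult_eq_0_iff zero_neq_numeral)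
        next
          case False
          hence "odd (card A)" using c by auto
          hence "cl_hat ?U0 A = - ?U0 A" unfolding cl_hat_def by simp
          thus ?thesis using hU0 by (metis add_eq_0_iff eq_neg_iff_add_eq_0 mult_2 mult_eq_0_iff zero_neq_numeral)
        qed
      qed
    qed
    thus "T \<in> cl_Q' sg n" unfolding cl_Q'_def cl_units_def using TP UU0 by blast
  qed
qed

end

context clf begin
lemma part_n8:
  assumes "n mod 4 = 0" "8 \<le> n"
  shows "cl_Q' sg n \<noteq> cl_P sg n"
proof -
  define B where "B = {..<4::nat}"
  have cB: "card B = 4" unfolding B_def by simp
  have BN: "B \<subseteq> N" using assms unfolding B_def by (simp add: lessThan_subset_iff)
  have "(0::nat) \<in> B" unfolding B_def by simp
  hence Bne: "B \<noteq> {}" by blast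
  have "(4::nat) \<in> N" "(4::nat) \<notin> B" using assms unfolding B_def by simp_all
  hence BneN: "B \<noteq> N" by blast
  define s where "s = blade_sign sg B B"
  have fB: "finite B" unfolding B_def by simp
  have ss: "s * s = 1" unfolding s_def using bs_sq[OF fB sq] .
  define T where "T = (gsp B 2 1 :: nat set \<Rightarrow> 'a)"
  have Tc: "T \<in> clif n" unfolding T_def by (rule gsp_clif[OF BN])
  have hT: "cl_hat T = T" unfolding T_def hat_gsp cB by simp
  have "2 * 2 - s * 1 * 1 \<noteq> (0::'a)" using sq1_cases[OF ss] by auto
  hence UT: "U T" unfolding T_def s_def using U_gsp[OF BN Bne] by simp
  have "T \<in> cl_units sg n (cl_even n)" unfolding cl_units_def using even_iff Tc hT UT by blast
  hence TP: "T \<in> cl_P sg n" using P_intro1 by blast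
  have rT: "cl_rev T = T" unfolding T_def rev_gsp cB by simp
  have gm: "m (gsp B 2 1) (gsp B 2 1) = gsp B (2 * 2 + s * 1 * 1) (2 * 1 + 1 * 2)"
    unfolding s_def by (rule gsp_mult[OF BN Bne])
  have "m (cl_rev T) T = gsp B (2 * 2 + s * 1 * 1) (2 * 1 + 1 * 2)"
    unfolding rT unfolding T_def by (rule gm)
  hence U0: "m (cl_rev T) T = gsp B (4 + s) 4" by simp
  have "m (cl_rev T) T \<notin> cl_scal_pseudo n"
  proof
    assume "m (cl_rev T) T \<in> cl_scal_pseudo n"
    hence "\<forall>A. A \<noteq> {} \<and> A \<noteq> N \<longrightarrow> m (cl_rev T) T A = 0" unfolding cl_scal_pseudo_def by simp
    hence "m (cl_rev T) T B = 0" using Bne BneN by simp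
    thus False unfolding U0 gsp_apply using Bne by simp
  qed
  hence nQ: "T \<notin> cl_Q' sg n" unfolding cl_Q'_def cl_units_def by simp
  show ?thesis
  proof
    assume "cl_Q' sg n = cl_P sg n"
    thus False using TP nQ by simp
  qed
qed

theorem main_clf:
  "cl_A' sg n \<inter> cl_B' sg n = cl_Q' sg n \<and>
      (n mod 4 \<in> {1,2,3} \<longrightarrow> cl_Q' sg n = cl_Q sg n) \<and>
      (n mod 4 = 0 \<longrightarrow> cl_Q sg n \<subseteq> cl_Q' sg n \<and>
          cl_Q' sg n \<subseteq> cl_P sg n \<and>
          cl_Q sg n \<noteq> cl_Q' sg n) \<and>
      (n = 4 \<longrightarrow> cl_Q' sg n = cl_P sg n) \<and>
      (n mod 4 = 0 \<and> n \<ge> 8 \<longrightarrow> cl_Q' sg n \<noteq> cl_P sg n)"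
proof (intro conjI impI)
  show "cl_A' sg n \<inter> cl_B' sg n = cl_Q' sg n" by (rule part1)
next
  assume h: "n mod 4 \<in> {1,2,3}"
  show "cl_Q' sg n = cl_Q sg n"
  proof (cases "odd n")
    case True thus ?thesis by (rule Q_eq_odd)
  next
    case False
    have "n mod 4 = 1 \<or> n mod 4 = 2 \<or> n mod 4 = 3" using h by simp
    hence "n mod 4 = 2" using False by presburger
    thus ?thesis by (rule Q_eq_2)
  qed
next
  show "cl_Q sg n \<subseteq> cl_Q' sg n" by (rule Q_sub_Qp)
next
  show "cl_Q' sg n \<subseteq> cl_P sg n" unfolding cl_Q'_def by blast
next
  assume "n mod 4 = 0" thus "cl_Q sg n \<noteq> cl_Q' sg n" by (rule part0_neq)
next
  assume "n = 4" thus "cl_Q' sg n = cl_P sg n" by (rule part_n4)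
next
  assume h: "n mod 4 = 0 \<and> 8 \<le> n"
  show "cl_Q' sg n \<noteq> cl_P sg n" by (rule part_n8) (use h in auto)
qed

end


lemma clf_real: "2 \<le> n \<Longrightarrow> clf (real_sig p) n"
  by unfold_locales (auto simp: real_sig_def)

lemma clf_complex: "2 \<le> n \<Longrightarrow> clf complex_sig n"
  by unfold_locales (auto simp: complex_sig_def)

theorem mainTheorem10:
  fixes n :: nat
  assumes "n \<ge> 2"
  shows
   "(\<forall>p q. p + q = n \<longrightarrow>
      cl_A' (real_sig p) n \<inter> cl_B' (real_sig p) n = cl_Q' (real_sig p) n \<and>
      (n mod 4 \<in> {1,2,3} \<longrightarrow> cl_Q' (real_sig p) n = cl_Q (real_sig p) n) \<and>
      (n mod 4 = 0 \<longrightarrow> cl_Q (real_sig p) n \<subseteq> cl_Q' (real_sig p) n \<and>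
          cl_Q' (real_sig p) n \<subseteq> cl_P (real_sig p) n \<and>
          cl_Q (real_sig p) n \<noteq> cl_Q' (real_sig p) n) \<and>
      (n = 4 \<longrightarrow> cl_Q' (real_sig p) n = cl_P (real_sig p) n) \<and>
      (n mod 4 = 0 \<and> n \<ge> 8 \<longrightarrow> cl_Q' (real_sig p) n \<noteq> cl_P (real_sig p) n))
    \<and>
    (cl_A' complex_sig n \<inter> cl_B' complex_sig n = cl_Q' complex_sig n \<and>
      (n mod 4 \<in> {1,2,3} \<longrightarrow> cl_Q' complex_sig n = cl_Q complex_sig n) \<and>
      (n mod 4 = 0 \<longrightarrow> cl_Q complex_sig n \<subseteq> cl_Q' complex_sig n \<and>
          cl_Q' complex_sig n \<subseteq> cl_P complex_sig n \<and>
          cl_Q complex_sig n \<noteq> cl_Q' complex_sig n) \<and>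
      (n = 4 \<longrightarrow> cl_Q' complex_sig n = cl_P complex_sig n) \<and>
      (n mod 4 = 0 \<and> n \<ge> 8 \<longrightarrow> cl_Q' complex_sig n \<noteq> cl_P complex_sig n))"
proof -
  have R: "\<And>p. clf (real_sig p) n" using assms clf_real by blast
  have C: "clf complex_sig n" using assms clf_complex by blast
  show ?thesis
  proof (rule conjI)
    show "\<forall>p q. p + q = n \<longrightarrow>
      cl_A' (real_sig p) n \<inter> cl_B' (real_sig p) n = cl_Q' (real_sig p) n \<and>
      (n mod 4 \<in> {1,2,3} \<longrightarrow> cl_Q' (real_sig p) n = cl_Q (real_sig p) n) \<and>
      (n mod 4 = 0 \<longrightarrow> cl_Q (real_sig p) n \<subseteq> cl_Q' (real_sig p) n \<and>
          cl_Q' (real_sig p) n \<subseteq> cl_P (real_sig p) n \<and>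
          cl_Q (real_sig p) n \<noteq> cl_Q' (real_sig p) n) \<and>
      (n = 4 \<longrightarrow> cl_Q' (real_sig p) n = cl_P (real_sig p) n) \<and>
      (n mod 4 = 0 \<and> n \<ge> 8 \<longrightarrow> cl_Q' (real_sig p) n \<noteq> cl_P (real_sig p) n)"
      by (intro allI impI) (rule clf.main_clf[OF R])
  qed (rule clf.main_clf[OF C])
qed

end
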